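(* Suppose Assumption R holds with alternative (4)(i) and Assumption G holds. Fix $k\ge1$ and $\epsilon\in(0,1)$, and let $J_I^{(k)}=1-1(F_\emptyset^{(k,\epsilon)})$, with $I$ uniform on $V_n$. Then, as $n\to\infty$, $$\Big(\mathbb{E}_n\Big[\Big(J_I^{(k)}\sigma_-(\mathbf{X}_I)\sum_{j\to I}\sigma_+(\mathbf{X}_j)\Big)^p\Big]\Big)^{1/p}+\Big(\mathbb{E}_n\Big[\Big(J_I^{(k)}\sigma_-(\mathbf{X}_I)\sum_{j\to I}|g(0,\mathbf{X}_j)|\Big)^p\Big]\Big)^{1/p}\xrightarrow{P}0.$$
   Context: Setting. Let $\mathcal{S}'$ be a separable metric space with metric $\rho'$, let $\mathcal{S}=\mathbb{N}\times\mathbb{N}\times\mathcal{S}'$, and for $\mathbf{x}=(d^-,d^+,\mathbf{a}),\tilde{\mathbf{x}}=(\tilde d^-,\tilde d^+,\tilde{\mathbf{a}})\in\mathcal{S}$ put $\rho(\mathbf{x},\tilde{\mathbf{x}})=|d^--\tilde d^-|+|d^+-\tilde d^+|+\rho'(\mathbf{a},\tilde{\mathbf{a}})$. For each $n\ge1$, $G(V_n,E_n)$ is a random directed graph (multigraph allowed) on $V_n=\{1,\dots,n\}$; $j\to i$ means there is an edge from $j$ to $i$ (collections/sums over $j\to i$ run over inbound edges, with multiplicity). Vertex $i$ has an attribute $\mathbf{a}_i\in\mathcal{S}'$, in-degree $D_i^-$, out-degree $D_i^+$, and mark $\mathbf{X}_i=(D_i^-,D_i^+,\mathbf{a}_i)\in\mathcal{S}$.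 Let $\mathscr{F}_n=\sigma(\mathbf{a}_i:1\le i\le n)$, $\mathbb{P}_n(\cdot)=P(\cdot\mid\mathscr{F}_n)$, $\mathbb{E}_n[\cdot]=E[\cdot\mid\mathscr{F}_n]$, $\mathscr{G}_n=\sigma(\mathscr{F}_n,G(V_n,E_n))$, $\mathbf{P}_n(\cdot)=P(\cdot\mid\mathscr{G}_n)$, $\mathbf{E}_n[\cdot]=E[\cdot\mid\mathscr{G}_n]$, and $\boldsymbol{G}=\{G(V_n,E_n):n\ge1\}$. The recursion. Fix $p\in[1,\infty)$, a measurable $g:\mathbb{R}\times\mathcal{S}\to\mathbb{R}$, and a measurable map $\Phi$ assigning a real number $\Phi(\mathbf{x},z,\{(v_j,x_j):1\le j\le d^-\})$ to a mark $\mathbf{x}=(d^-,d^+,\mathbf{a})\in\mathcal{S}$, a vertex-noise value $z$ and $d^-$ pairs (real value $v_j$, edge-noise value $x_j$). Let $\{\zeta_i^{(k)}:i\ge1,k\ge0\}$ and $\{\xi_{j,i}^{(k)}:i,j\ge1,k\ge0\}$ be two families of i.i.d. random variables, independent of each other and of the graphs and attributes. A generic noise vector $(\zeta,\{\xi_j\}_{j\ge1})$ consists of independent variables with $\zeta\stackrel{d}{=}\zeta_1^{(0)}$ and $\xi_j\stackrel{d}{=}\xi_{1,1}^{(0)}$. Let $R_i^{(0)}$, $i\in V_n$, be i.i.d. with law $\mu_0$, independent of everything else, and for $k\ge0$, $R_i^{(k+1)}=\Phi(\mathbf{X}_i,\zeta_i^{(k)},\{g(R_j^{(k)},\mathbf{X}_j),\xi_{j,i}^{(k)}:j\to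 i\})$, $i\in V_n$; $\mathbf{R}^{(k)}=(R_1^{(k)},\dots,R_n^{(k)})$. For matrices, $\|\cdot\|_p$ is the operator norm induced by the $\ell_p$ norm. Assumption R. There exist continuous $\sigma_-,\sigma_+,\beta:\mathcal{S}\to[0,\infty)$ such that, for every $\mathbf{x}=(d^-,d^+,\mathbf{a})\in\mathcal{S}$, with $(\zeta,\{\xi_j\})$ a generic noise vector: (1) for all $v,\tilde v\in\mathbb{R}^{d^-}$: $(E|\Phi(\mathbf{x},\zeta,\{v_j,\xi_j\}_{j\le d^-})-\Phi(\mathbf{x},\zeta,\{\tilde v_j,\xi_j\}_{j\le d^-})|^p)^{1/p}\le\sigma_-(\mathbf{x})\sum_{j=1}^{d^-}|v_j-\tilde v_j|$; (2) $|g(r,\mathbf{x})-g(\tilde r,\mathbf{x})|\le\sigma_+(\mathbf{x})|r-\tilde r|$ for all $r,\tilde r\in\mathbb{R}$; (3) for all $v\in\mathbb{R}^{d^-}$: $(E|\Phi(\mathbf{x},\zeta,\{v_j,\xi_j\}_{j\le d^-})|^p)^{1/p}\le\sigma_-(\mathbf{x})\sum_{j=1}^{d^-}|v_j|+\beta(\mathbf{x})$; (4)(i) there are $K,K_0<\infty$ such that a.s. for every $n$ the $n\times n$ matrices $C$, $C^{(0)}$ with entries $C_{i,j}=\sigma_-(\mathbf{X}_i)\sigma_+(\mathbf{X}_j)1(j\to i)$ and $C^{(0)}_{i,j}=\sigma_-(\mathbf{X}_i)|g(0,\mathbf{X}_j)|1(j\to i)$ satisfy $\|C\|_p\le K$,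 $\|C^{(0)}\|_p\le K_0$; (5) there are constants $H,Q,\alpha,\gamma>0$ such that for all $v\in\mathbb{R}^{d^-}$, $r\in\mathbb{R}$, $\epsilon\in(0,1)$ and $\tilde{\mathbf{x}}\in\mathcal{S}$ with $\rho(\mathbf{x},\tilde{\mathbf{x}})\le\epsilon$: $(E|\Phi(\mathbf{x},\zeta,\{v_j,\xi_j\})-\Phi(\tilde{\mathbf{x}},\zeta,\{v_j,\xi_j\})|^p)^{1/p}\le H(1\vee(\sigma_-(\mathbf{x})\sum_j|v_j|+\beta(\mathbf{x})))\rho(\mathbf{x},\tilde{\mathbf{x}})^\alpha$ and $|g(r,\mathbf{x})-g(r,\tilde{\mathbf{x}})|\le Q(1\vee\sigma_+(\mathbf{x})|r|)\rho(\mathbf{x},\tilde{\mathbf{x}})^\gamma$. Delayed marked Galton–Watson tree. Let $\mathcal{U}=\bigcup_{k\ge0}\mathbb{N}_+^k$ with $\mathbb{N}_+^0=\{\emptyset\}$ (the root); $(\mathbf{i},j)$ is concatenation, and $j$ stands for $(j)$. Let $\{(\mathcal{N}_\mathbf{i},\boldsymbol{X}_\mathbf{i}):\mathbf{i}\in\mathcal{U}\}$ be independent, $\mathcal{N}_\mathbf{i}\in\mathbb{N}$, $\boldsymbol{X}_\mathbf{i}\in\mathcal{S}$ with first coordinate equal to $\mathcal{N}_\mathbf{i}$, the vectors with $\mathbf{i}\ne\emptyset$ i.i.d. (the root's may have a different law). $\mathcal{A}_0=\{\emptyset\}$, $\mathcal{A}_k=\{(\mathbf{i},j):\mathbf{i}\in\mathcal{A}_{k-1},1\le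 j\le\mathcal{N}_\mathbf{i}\}$, $\mathcal{T}^{(k)}=\bigcup_{r=0}^k\mathcal{A}_r$. Strong coupling. For $I\in V_n$ let $A_0=\{I\}$, $A_r$ be the set of vertices having a directed path of length $r$ to $I$, and $\mathcal{G}_I^{(k)}$ the subgraph on $\bigcup_{r\le k}A_r$. $\boldsymbol{G}$ admits a strong coupling if for each $n$ and $I$ one can construct, on the same probability space, a delayed marked Galton–Watson tree (with law not depending on $n$) whose root corresponds to $I$, such that, writing $\mathcal{G}_I^{(k)}\simeq\mathcal{T}^{(k)}$ for graph isomorphism via a bijection with node $\mathbf{i}$ corresponding to vertex $\theta(\mathbf{i})$ ($\theta(\emptyset)=I$), and taking $I$ uniform on $V_n$, for each fixed $k\ge1$ and $\epsilon\in(0,1)$, as $n\to\infty$: $\mathbb{P}_n(\mathcal{G}_I^{(k)}\not\simeq\mathcal{T}^{(k)})\xrightarrow{P}0$, $\mathbb{E}_n[\rho(\mathbf{X}_I,\boldsymbol{X}_\emptyset)]\xrightarrow{P}0$, and $\mathbb{P}_n(\{\mathcal{G}_I^{(k)}\simeq\mathcal{T}^{(k)}\}\cap\bigcap_{r=0}^k\bigcap_{\mathbf{i}\in\mathcal{A}_r}\{\rho(\mathbf{X}_{\theta(\mathbf{i})},\boldsymbol{X}_\mathbf{i})\le\epsilon\})\xrightarrow{P}1$. The event $F_\emptyset^{(k,\epsilon)}$ is $\{\mathcal{G}_I^{(k)}\simeq\mathcal{T}^{(k)}\}\cap\bigcap_{s=0}^k\bigcap_{\mathbf{i}\in\mathcal{A}_s}\{\rho(\mathbf{X}_{\theta(\mathbf{i})},\boldsymbol{X}_\mathbf{i})\le\epsilon\}$.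 Wasserstein distance. $d_p(\mu,\nu)=\inf\{(E|X-Y|^p)^{1/p}:\mathrm{law}(X)=\mu,\mathrm{law}(Y)=\nu\}$; $X_n\xrightarrow{d_p}X$ means the conditional law $\nu_n$ of $X_n$ given $\mathscr{F}_n$ satisfies $d_p(\nu_n,\mathrm{law}(X))\xrightarrow{P}0$. Assumption G. $\boldsymbol{G}$ admits a strong coupling, and, for the $p$ of Assumption R: $E[(\mathcal{N}_\emptyset\sigma_-(\boldsymbol{X}_\emptyset))^p+\beta(\boldsymbol{X}_\emptyset)^p]<\infty$; $E[(\mathcal{N}_1\sigma_-(\boldsymbol{X}_1)\sigma_+(\boldsymbol{X}_1))^p+(\sigma_+(\boldsymbol{X}_1)\beta(\boldsymbol{X}_1))^p+\sigma_+(\boldsymbol{X}_1)^p+|g(0,\boldsymbol{X}_1)|^p]<\infty$; and, with $f_*(\mathbf{x})=\sigma_-(\mathbf{x})d^-$ for $\mathbf{x}=(d^-,d^+,\mathbf{a})$ and $I$ uniform on $V_n$, $f_*(\mathbf{X}_I)\xrightarrow{d_p}f_*(\boldsymbol{X}_\emptyset)$ and $\beta(\mathbf{X}_I)\xrightarrow{d_p}\beta(\boldsymbol{X}_\emptyset)$. *)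

theory Defs
  imports "HOL-Probability.Probability"
begin

type_synonym 'a mark = "nat \<times> nat \<times> 'a"

definition rho :: "'a::metric_space mark \<Rightarrow> 'a mark \<Rightarrow> real" where
  "rho x y = (case x of (dm, dp, a) \<Rightarrow> case y of (em, ep, b) \<Rightarrow>
      \<bar>real dm - real em\<bar> + \<bar>real dp - real ep\<bar> + dist a b)"

definition indeg_of :: "'a mark \<Rightarrow> nat" where "indeg_of x = fst x"

definition enn_root :: "real \<Rightarrow> ennreal \<Rightarrow> ennreal" where
  "enn_root p x = (if x = \<infinity> then \<infinity> else ennreal (enn2real x powr (1 / p)))"

text \<open>Outer probability, used so that convergence in probability makes sense
  without separate measurability assumptions.\<close>
definition outer_prob :: "'w measure \<Rightarrow> 'w set \<Rightarrow> ennreal" where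
  "outer_prob M S = (INF A \<in> {A \<in> sets M. S \<subseteq> A}. emeasure M A)"

definition conv_prob :: "'w measure \<Rightarrow> (nat \<Rightarrow> 'w \<Rightarrow> real) \<Rightarrow> real \<Rightarrow> bool" where
  "conv_prob M X c \<longleftrightarrow> (\<forall>\<delta>>0. ((\<lambda>n. outer_prob M {\<omega> \<in> space M. \<delta> < \<bar>X n \<omega> - c\<bar>}) \<longlongrightarrow> 0) sequentially)"

definition conv_prob_enn0 :: "'w measure \<Rightarrow> (nat \<Rightarrow> 'w \<Rightarrow> ennreal) \<Rightarrow> bool" where
  "conv_prob_enn0 M X \<longleftrightarrow> (\<forall>\<delta>::real>0. ((\<lambda>n. outer_prob M {\<omega> \<in> space M. ennreal \<delta> < X n \<omega>}) \<longlongrightarrow> 0) sequentially)"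

definition opnorm_p :: "real \<Rightarrow> nat \<Rightarrow> (nat \<Rightarrow> nat \<Rightarrow> real) \<Rightarrow> ennreal" where
  "opnorm_p p n A = (SUP x \<in> {x :: nat \<Rightarrow> real. (\<Sum>j\<in>{1..n}. \<bar>x j\<bar> powr p) \<le> 1}.
      ennreal ((\<Sum>i\<in>{1..n}. \<bar>\<Sum>j\<in>{1..n}. A i j * x j\<bar> powr p) powr (1 / p)))"

definition couplings :: "real measure \<Rightarrow> real measure \<Rightarrow> (real \<times> real) measure set" where
  "couplings \<mu> \<nu> = {\<pi>. prob_space \<pi> \<and> sets \<pi> = sets (borel \<Otimes>\<^sub>M borel)
      \<and> distr \<pi> borel fst = \<mu> \<and> distr \<pi> borel snd = \<nu>}"

definition wasserstein :: "real \<Rightarrow> real measure \<Rightarrow> real measure \<Rightarrow> ennreal" where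
  "wasserstein p \<mu> \<nu> = enn_root p (INF \<pi> \<in> couplings \<mu> \<nu>.
      \<integral>\<^sup>+ z. ennreal (\<bar>fst z - snd z\<bar> powr p) \<partial>\<pi>)"

text \<open>edges n j i \<omega> = number of edges from j to i in G(V_n,E_n), vertices {1..n}.\<close>

definition indeg :: "(nat \<Rightarrow> nat \<Rightarrow> nat \<Rightarrow> 'w \<Rightarrow> nat) \<Rightarrow> nat \<Rightarrow> nat \<Rightarrow> 'w \<Rightarrow> nat" where
  "indeg E n i \<omega> = (\<Sum>j\<in>{1..n}. E n j i \<omega>)"

definition outdeg :: "(nat \<Rightarrow> nat \<Rightarrow> nat \<Rightarrow> 'w \<Rightarrow> nat) \<Rightarrow> nat \<Rightarrow> nat \<Rightarrow> 'w \<Rightarrow> nat" where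
  "outdeg E n i \<omega> = (\<Sum>j\<in>{1..n}. E n i j \<omega>)"

definition gmark :: "(nat \<Rightarrow> nat \<Rightarrow> nat \<Rightarrow> 'w \<Rightarrow> nat) \<Rightarrow> (nat \<Rightarrow> nat \<Rightarrow> 'w \<Rightarrow> 'a) \<Rightarrow> nat \<Rightarrow> nat \<Rightarrow> 'w \<Rightarrow> 'a mark" where
  "gmark E attr n i \<omega> = (indeg E n i \<omega>, outdeg E n i \<omega>, attr n i \<omega>)"

definition Fn :: "'w measure \<Rightarrow> (nat \<Rightarrow> nat \<Rightarrow> 'w \<Rightarrow> 'a::topological_space) \<Rightarrow> nat \<Rightarrow> 'w measure" where
  "Fn M attr n = sigma (space M) {attr n i -` B \<inter> space M | i B. i \<in> {1..n} \<and> B \<in> sets borel}"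

text \<open>v has a directed walk of length r ending at I (equivalently, for the union over r<=k,
  a directed path of length at most k).\<close>
definition has_walk :: "(nat \<Rightarrow> nat \<Rightarrow> nat \<Rightarrow> 'w \<Rightarrow> nat) \<Rightarrow> nat \<Rightarrow> nat \<Rightarrow> nat \<Rightarrow> nat \<Rightarrow> 'w \<Rightarrow> bool" where
  "has_walk E n r v I \<omega> \<longleftrightarrow> (\<exists>f :: nat \<Rightarrow> nat. f 0 = v \<and> f r = I \<and>
      (\<forall>t\<le>r. f t \<in> {1..n}) \<and> (\<forall>t<r. 1 \<le> E n (f t) (f (Suc t)) \<omega>))"

definition nbhd :: "(nat \<Rightarrow> nat \<Rightarrow> nat \<Rightarrow> 'w \<Rightarrow> nat) \<Rightarrow> nat \<Rightarrow> nat \<Rightarrow> nat \<Rightarrow> 'w \<Rightarrow> nat set" where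
  "nbhd E n k I \<omega> = {v \<in> {1..n}. \<exists>r\<le>k. has_walk E n r v I \<omega>}"

text \<open>Ulam-Harris labels: lists of positive naturals; (i,j) = i @ [j].\<close>
definition ulam :: "nat list set" where "ulam = {u. \<forall>x\<in>set u. 1 \<le> x}"

fun tree_level :: "(nat list \<Rightarrow> nat) \<Rightarrow> nat \<Rightarrow> nat list set" where
  "tree_level N 0 = {[]}"
| "tree_level N (Suc r) = {u @ [j] | u j. u \<in> tree_level N r \<and> 1 \<le> j \<and> j \<le> N u}"

definition tree_upto :: "(nat list \<Rightarrow> nat) \<Rightarrow> nat \<Rightarrow> nat list set" where
  "tree_upto N k = (\<Union>r\<le>k. tree_level N r)"

text \<open>G_I^(k) isomorphic to T^(k) via theta (node u <-> vertex theta u), T^(k) having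
  one edge from each child u@[j] to its parent u; G_I^(k) is the induced subgraph.\<close>
definition iso_event ::
  "(nat \<Rightarrow> nat \<Rightarrow> nat \<Rightarrow> 'w \<Rightarrow> nat) \<Rightarrow> nat \<Rightarrow> nat \<Rightarrow> nat \<Rightarrow> (nat list \<Rightarrow> 'w \<Rightarrow> 'a mark)
    \<Rightarrow> (nat list \<Rightarrow> 'w \<Rightarrow> nat) \<Rightarrow> 'w \<Rightarrow> bool" where
  "iso_event E n k I Xt \<theta> \<omega> \<longleftrightarrow>
     (let T = tree_upto (\<lambda>u. fst (Xt u \<omega>)) k in
       \<theta> [] \<omega> = I \<and> bij_betw (\<lambda>u. \<theta> u \<omega>) T (nbhd E n k I \<omega>) \<and>
       (\<forall>u\<in>T. \<forall>v\<in>T. E n (\<theta> u \<omega>) (\<theta> v \<omega>) \<omega> = (if \<exists>j. u = v @ [j] then 1 else 0)))"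

definition F_event ::
  "(nat \<Rightarrow> nat \<Rightarrow> nat \<Rightarrow> 'w \<Rightarrow> nat) \<Rightarrow> (nat \<Rightarrow> nat \<Rightarrow> 'w \<Rightarrow> 'a::metric_space) \<Rightarrow> nat \<Rightarrow> nat \<Rightarrow> real
    \<Rightarrow> nat \<Rightarrow> (nat list \<Rightarrow> 'w \<Rightarrow> 'a mark) \<Rightarrow> (nat list \<Rightarrow> 'w \<Rightarrow> nat) \<Rightarrow> 'w \<Rightarrow> bool" where
  "F_event E attr n k \<epsilon> I Xt \<theta> \<omega> \<longleftrightarrow> iso_event E n k I Xt \<theta> \<omega> \<and>
     (\<forall>u \<in> tree_upto (\<lambda>u. fst (Xt u \<omega>)) k. rho (gmark E attr n (\<theta> u \<omega>) \<omega>) (Xt u \<omega>) \<le> \<epsilon>)"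

definition noise_Lp :: "'z measure \<Rightarrow> 'x measure \<Rightarrow> nat \<Rightarrow> real \<Rightarrow> ('z \<Rightarrow> (nat \<Rightarrow> 'x) \<Rightarrow> real) \<Rightarrow> ennreal" where
  "noise_Lp Z Xi d p W = enn_root p
     (\<integral>\<^sup>+ z. ennreal (\<bar>W (fst z) (snd z)\<bar> powr p) \<partial>(Z \<Otimes>\<^sub>M PiM {..<d} (\<lambda>_. Xi)))"

text \<open>Phi(x, z, {(v_j, xi_j) : j <= d^-}) with d^- the in-degree coordinate of x.\<close>
definition Phi_app :: "('a mark \<Rightarrow> 'z \<Rightarrow> (real \<times> 'x) list \<Rightarrow> real) \<Rightarrow> 'a mark \<Rightarrow> nat
     \<Rightarrow> (nat \<Rightarrow> real) \<Rightarrow> 'z \<Rightarrow> (nat \<Rightarrow> 'x) \<Rightarrow> real" where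
  "Phi_app \<Phi> x d v z xs = \<Phi> x z (map (\<lambda>j. (v j, xs j)) [0..<d])"


text \<open>kappa is a (F-measurable) regular version of the conditional law given F of Y_I,
  I uniform on {1..n} and independent of everything else.\<close>
definition cond_law_mix :: "'w measure \<Rightarrow> 'w measure \<Rightarrow> nat \<Rightarrow> (nat \<Rightarrow> 'w \<Rightarrow> real)
     \<Rightarrow> ('w \<Rightarrow> real measure) \<Rightarrow> bool" where
  "cond_law_mix M F n Y \<kappa> \<longleftrightarrow>
     (\<forall>\<omega>\<in>space M. prob_space (\<kappa> \<omega>) \<and> sets (\<kappa> \<omega>) = sets borel) \<and>
     (\<forall>B\<in>sets borel. (\<lambda>\<omega>. emeasure (\<kappa> \<omega>) B) \<in> borel_measurable F \<and>
        (AE \<omega> in M. emeasure (\<kappa> \<omega>) B =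
           ennreal (1 / real n) * (\<Sum>i\<in>{1..n}. nn_cond_exp M F (indicator {\<omega>\<in>space M. Y i \<omega> \<in> B}) \<omega>)))"

definition dp_conv :: "'w measure \<Rightarrow> (nat \<Rightarrow> 'w measure) \<Rightarrow> real \<Rightarrow> (nat \<Rightarrow> nat \<Rightarrow> 'w \<Rightarrow> real)
     \<Rightarrow> real measure \<Rightarrow> bool" where
  "dp_conv M F p Y L \<longleftrightarrow> (\<exists>\<kappa> :: nat \<Rightarrow> 'w \<Rightarrow> real measure.
     (\<forall>n\<ge>1. cond_law_mix M (F n) n (Y n) (\<kappa> n)) \<and>
     conv_prob_enn0 M (\<lambda>n \<omega>. wasserstein p (\<kappa> n \<omega>) L))"

end

theory Submission
  imports Defs
begin


lemma op_le: "A \<in> sets M \<Longrightarrow> S \<subseteq> A \<Longrightarrow> outer_prob M S \<le> emeasure M A"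
  unfolding outer_prob_def by (rule INF_lower) auto

lemma op_mono: "S \<subseteq> T \<Longrightarrow> outer_prob M S \<le> outer_prob M T"
  unfolding outer_prob_def by (rule INF_superset_mono) auto

lemma op_union:
  assumes "finite_measure M"
  shows "outer_prob M (S \<union> T) \<le> outer_prob M S + outer_prob M T"
proof (rule ennreal_le_epsilon)
  fix e :: real assume top: "outer_prob M S + outer_prob M T < top" and e: "0 < e"
  have "outer_prob M S < outer_prob M S + ennreal (e/2)"
    using top e by (simp add: ennreal_add_left_cancel_less less_top[symmetric]) 
  then obtain A where A: "A \<in> sets M" "S \<subseteq> A" "emeasure M A < outer_prob M S + ennreal (e/2)"
    unfolding outer_prob_def[of M S] INF_less_iff by auto
  have "outer_prob M T < outer_prob M T + ennreal (e/2)"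
    using top e by (simp add: ennreal_add_left_cancel_less less_top[symmetric])
  then obtain B where B: "B \<in> sets M" "T \<subseteq> B" "emeasure M B < outer_prob M T + ennreal (e/2)"
    unfolding outer_prob_def[of M T] INF_less_iff by auto
  have "outer_prob M (S \<union> T) \<le> emeasure M (A \<union> B)"
    using A B by (intro op_le) auto
  also have "\<dots> \<le> emeasure M A + emeasure M B" using A B by (intro emeasure_subadditive) auto
  also have "\<dots> \<le> (outer_prob M S + ennreal (e/2)) + (outer_prob M T + ennreal (e/2))"
    using A B by (intro add_mono) auto
  also have "\<dots> = outer_prob M S + outer_prob M T + ennreal e"
    using e by (simp add: ennreal_plus[symmetric] algebra_simps del: ennreal_plus)
  finally show "outer_prob M (S \<union> T) \<le> outer_prob M S + outer_prob M T + ennreal e" .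
qed

lemma op_null: "N \<in> null_sets M \<Longrightarrow> S \<subseteq> N \<Longrightarrow> outer_prob M S = 0"
  using op_le[of N M S] by (metis le_zero_eq null_setsD1 null_setsD2)

lemma op_AE_union:
  assumes "finite_measure M" "AE x in M. x \<in> space M \<longrightarrow> (x \<in> S \<longrightarrow> x \<in> T)" "S \<subseteq> space M"
  shows "outer_prob M S \<le> outer_prob M T"
proof -
  from assms(2) obtain N where N: "N \<in> null_sets M" "{x\<in>space M. \<not> (x \<in> S \<longrightarrow> x \<in> T)} \<subseteq> N"
    unfolding eventually_ae_filter by auto
  have "S \<subseteq> T \<union> N" using N assms(3) by auto
  hence "outer_prob M S \<le> outer_prob M (T \<union> N)" by (rule op_mono)
  also have "\<dots> \<le> outer_prob M T + outer_prob M N" by (rule op_union[OF assms(1)])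
  also have "outer_prob M N = 0" using N by (intro op_null) auto
  finally show ?thesis by simp
qed

lemma conv_enn0_I:
  assumes "\<And>\<delta> \<eta>. 0 < \<delta> \<Longrightarrow> 0 < \<eta> \<Longrightarrow> \<exists>N. \<forall>n\<ge>N.
     outer_prob M {\<omega> \<in> space M. ennreal \<delta> < X n \<omega>} \<le> ennreal \<eta>"
  shows "conv_prob_enn0 M X"
  unfolding conv_prob_enn0_def
proof (intro allI impI order_tendstoI)
  fix \<delta> :: real and a :: ennreal assume d: "0 < \<delta>" and a: "0 < a"
  obtain \<eta> where e: "0 < \<eta>" "ennreal \<eta> < a"
  proof (cases "a = top")
    case True thus ?thesis using that[of 1] by simp
  next
    case False
    then obtain r where r: "a = ennreal r" "0 \<le> r" by (cases a) auto
    with a have "0 < r" by simp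
    thus ?thesis using that[of "r/2"] r by (simp add: ennreal_lessI)
  qed
  from assms[OF d e(1)] obtain N where "\<forall>n\<ge>N. outer_prob M {\<omega> \<in> space M. ennreal \<delta> < X n \<omega>} \<le> ennreal \<eta>" by auto
  hence "\<forall>n\<ge>N. outer_prob M {\<omega> \<in> space M. ennreal \<delta> < X n \<omega>} < a" using e by (auto intro: le_less_trans)
  thus "\<forall>\<^sub>F n in sequentially. outer_prob M {\<omega> \<in> space M. ennreal \<delta> < X n \<omega>} < a"
    unfolding eventually_sequentially by auto
qed simp

lemma conv_enn0_D:
  assumes "conv_prob_enn0 M X" "0 < \<delta>" "0 < \<eta>"
  shows "\<exists>N. \<forall>n\<ge>N. outer_prob M {\<omega> \<in> space M. ennreal \<delta> < X n \<omega>} \<le> ennreal \<eta>"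
proof -
  have "((\<lambda>n. outer_prob M {\<omega> \<in> space M. ennreal \<delta> < X n \<omega>}) \<longlongrightarrow> 0) sequentially"
    using assms unfolding conv_prob_enn0_def by auto
  from order_tendstoD(2)[OF this, of "ennreal \<eta>"] assms(3)
  show ?thesis unfolding eventually_sequentially by (auto intro: less_imp_le)
qed

lemma conv_prob_D:
  assumes "conv_prob M X c" "0 < \<delta>" "0 < \<eta>"
  shows "\<exists>N. \<forall>n\<ge>N. outer_prob M {\<omega> \<in> space M. \<delta> < \<bar>X n \<omega> - c\<bar>} \<le> ennreal \<eta>"
proof -
  have "((\<lambda>n. outer_prob M {\<omega> \<in> space M. \<delta> < \<bar>X n \<omega> - c\<bar>}) \<longlongrightarrow> 0) sequentially"
    using assms unfolding conv_prob_def by auto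
  from order_tendstoD(2)[OF this, of "ennreal \<eta>"] assms(3)
  show ?thesis unfolding eventually_sequentially by (auto intro: less_imp_le)
qed

lemma enn_root_less_iff:
  assumes p: "0 < p" and d: "0 < \<delta>"
  shows "ennreal \<delta> < enn_root p x \<longleftrightarrow> ennreal (\<delta> powr p) < x"
proof (cases "x = top")
  case True thus ?thesis by (simp add: enn_root_def)
next
  case False
  then obtain r where r: "x = ennreal r" "0 \<le> r" by (cases x) auto
  have "ennreal \<delta> < enn_root p x \<longleftrightarrow> \<delta> < r powr (1/p)"
    using r d by (simp add: enn_root_def ennreal_less_iff)
  also have "\<dots> \<longleftrightarrow> \<delta> powr p < (r powr (1/p)) powr p"
  proof
    assume "\<delta> < r powr (1/p)" thus "\<delta> powr p < (r powr (1/p)) powr p"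
      using d p by (intro powr_less_mono2) auto
  next
    assume h: "\<delta> powr p < (r powr (1/p)) powr p"
    show "\<delta> < r powr (1/p)"
    proof (rule ccontr)
      assume "\<not> \<delta> < r powr (1/p)"
      hence "(r powr (1/p)) powr p \<le> \<delta> powr p" using p by (intro powr_mono2) auto
      with h show False by simp
    qed
  qed
  also have "(r powr (1/p)) powr p = r" using p r by (simp add: powr_powr)
  also have "\<delta> powr p < r \<longleftrightarrow> ennreal (\<delta> powr p) < x" using r d by (simp add: ennreal_less_iff)
  finally show ?thesis .
qed

lemma conv_enn0_root:
  assumes p: "0 < p" and c: "conv_prob_enn0 M X"
  shows "conv_prob_enn0 M (\<lambda>n \<omega>. enn_root p (X n \<omega>))"
  unfolding conv_prob_enn0_def
proof (intro allI impI)
  fix \<delta> :: real assume d: "0 < \<delta>"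
  have "0 < \<delta> powr p" using d by simp
  with c have "((\<lambda>n. outer_prob M {\<omega> \<in> space M. ennreal (\<delta> powr p) < X n \<omega>}) \<longlongrightarrow> 0) sequentially"
    unfolding conv_prob_enn0_def by auto
  thus "((\<lambda>n. outer_prob M {\<omega> \<in> space M. ennreal \<delta> < enn_root p (X n \<omega>)}) \<longlongrightarrow> 0) sequentially"
    by (simp add: enn_root_less_iff[OF p d])
qed

lemma conv_enn0_add:
  assumes M: "finite_measure M" and c: "conv_prob_enn0 M X" "conv_prob_enn0 M Y"
  shows "conv_prob_enn0 M (\<lambda>n \<omega>. X n \<omega> + Y n \<omega>)"
proof (rule conv_enn0_I)
  fix \<delta> \<eta> :: real assume d: "0 < \<delta>" "0 < \<eta>"
  obtain N1 where N1: "\<forall>n\<ge>N1. outer_prob M {\<omega> \<in> space M. ennreal (\<delta>/2) < X n \<omega>} \<le> ennreal (\<eta>/2)"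
    using conv_enn0_D[OF c(1), of "\<delta>/2" "\<eta>/2"] d by auto
  obtain N2 where N2: "\<forall>n\<ge>N2. outer_prob M {\<omega> \<in> space M. ennreal (\<delta>/2) < Y n \<omega>} \<le> ennreal (\<eta>/2)"
    using conv_enn0_D[OF c(2), of "\<delta>/2" "\<eta>/2"] d by auto
  show "\<exists>N. \<forall>n\<ge>N. outer_prob M {\<omega> \<in> space M. ennreal \<delta> < X n \<omega> + Y n \<omega>} \<le> ennreal \<eta>"
  proof (intro exI allI impI)
    fix n assume n: "max N1 N2 \<le> n"
    have sub: "{\<omega> \<in> space M. ennreal \<delta> < X n \<omega> + Y n \<omega>} \<subseteq>
       {\<omega> \<in> space M. ennreal (\<delta>/2) < X n \<omega>} \<union> {\<omega> \<in> space M. ennreal (\<delta>/2) < Y n \<omega>}"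
    proof safe
      fix \<omega> assume "\<omega> \<in> space M" "ennreal \<delta> < X n \<omega> + Y n \<omega>" "\<not> ennreal (\<delta> / 2) < Y n \<omega>"
      hence "ennreal \<delta> < X n \<omega> + ennreal (\<delta>/2)" by (meson add_left_mono less_le_trans not_less)
      also have "ennreal \<delta> = ennreal (\<delta>/2) + ennreal (\<delta>/2)" using d by (simp flip: ennreal_plus)
      finally show "ennreal (\<delta> / 2) < X n \<omega>"
        by (metis add_right_mono not_less)
    qed
    have "outer_prob M {\<omega> \<in> space M. ennreal \<delta> < X n \<omega> + Y n \<omega>} \<le> ennreal (\<eta>/2) + ennreal (\<eta>/2)"
      using op_mono[OF sub] op_union[OF M] N1 N2 n
      by (meson add_mono max.bounded_iff order_trans)
    also have "\<dots> = ennreal \<eta>" using d by (simp flip: ennreal_plus)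
    finally show "outer_prob M {\<omega> \<in> space M. ennreal \<delta> < X n \<omega> + Y n \<omega>} \<le> ennreal \<eta>" .
  qed
qed



lemma meas_nat_sum:
  fixes f :: "nat \<Rightarrow> 'w \<Rightarrow> nat"
  assumes "\<And>j. f j \<in> measurable M (count_space UNIV)"
  shows "(\<lambda>\<omega>. \<Sum>j\<in>S. f j \<omega>) \<in> measurable M (count_space UNIV)"
proof -
  have eq: "measurable M (count_space UNIV) = (borel_measurable M :: ('w \<Rightarrow> nat) set)"
    by (rule measurable_cong_sets) (auto simp: sets_borel_eq_count_space)
  show ?thesis using assms unfolding eq by (intro borel_measurable_sum) auto
qed

lemma nat_meas_borel:
  fixes f :: "'w \<Rightarrow> nat"
  assumes "f \<in> measurable M (count_space UNIV)"
  shows "f \<in> borel_measurable M"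
proof -
  have eq: "measurable M (count_space UNIV) = (borel_measurable M :: ('w \<Rightarrow> nat) set)"
    by (rule measurable_cong_sets) (auto simp: sets_borel_eq_count_space)
  show ?thesis using assms eq by auto
qed

lemma gmark_meas:
  fixes attr :: "nat \<Rightarrow> nat \<Rightarrow> 'w \<Rightarrow> 'a::{metric_space, second_countable_topology}"
  assumes "\<And>n i. attr n i \<in> borel_measurable M"
    and "\<And>n j i. E n j i \<in> measurable M (count_space UNIV)"
  shows "gmark E attr n i \<in> borel_measurable M"
proof -
  have "indeg E n i \<in> borel_measurable M" unfolding indeg_def
    by (intro nat_meas_borel meas_nat_sum assms)
  moreover have "outdeg E n i \<in> borel_measurable M" unfolding outdeg_def
    by (intro nat_meas_borel meas_nat_sum assms)
  ultimately show ?thesis unfolding gmark_def[abs_def] using assms(1)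
    by (intro borel_measurable_Pair) auto
qed

lemma Fn_subalg:
  assumes "\<And>n i. attr n i \<in> borel_measurable M"
  shows "subalgebra M (Fn M attr n)"
proof -
  let ?G = "{attr n i -` B \<inter> space M | i B. i \<in> {1..n} \<and> B \<in> sets borel}"
  have G: "?G \<subseteq> sets M" using assms by (auto intro: measurable_sets)
  hence G': "?G \<subseteq> Pow (space M)" using sets.sets_into_space by auto
  show ?thesis unfolding subalgebra_def Fn_def
    using G G' sets.sigma_sets_subset[OF G] by (auto simp: sets_measure_of)
qed

context finite_measure_subalgebra
begin

lemma ncs_sum:
  assumes "finite I" "\<And>i. i \<in> I \<Longrightarrow> f i \<in> borel_measurable M"
  shows "AE x in M. nn_cond_exp M F (\<lambda>x. \<Sum>i\<in>I. f i x) x = (\<Sum>i\<in>I. nn_cond_exp M F (f i) x)"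
  using assms
proof (induction I rule: finite_induct)
  case empty
  have "AE x in M. nn_cond_exp M F (\<lambda>x. 0) x = 0"
    using nn_cond_exp_F_meas[of "\<lambda>x. 0"] by auto
  thus ?case by simp
next
  case (insert a I)
  have m: "(\<lambda>x. \<Sum>i\<in>I. f i x) \<in> borel_measurable M" using insert by auto
  have "AE x in M. nn_cond_exp M F (f a) x + nn_cond_exp M F (\<lambda>x. \<Sum>i\<in>I. f i x) x
      = nn_cond_exp M F (\<lambda>x. f a x + (\<Sum>i\<in>I. f i x)) x"
    using insert m by (intro nn_cond_exp_sum) auto
  with insert show ?case by auto
qed

lemma ncs_cmult:
  assumes "f \<in> borel_measurable M"
  shows "AE x in M. nn_cond_exp M F (\<lambda>x. c * f x) x = c * nn_cond_exp M F f x"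
  using nn_cond_exp_prod[of "\<lambda>_. c" f] assms by auto

lemma ncs_integral:
  assumes "f \<in> borel_measurable M"
  shows "(\<integral>\<^sup>+ x. nn_cond_exp M F f x \<partial>M) = (\<integral>\<^sup>+ x. f x \<partial>M)"
  using nn_cond_exp_intg[of "\<lambda>_. 1" f] assms by simp

lemma ncs_suminf:
  assumes "\<And>i. f i \<in> borel_measurable M"
  shows "AE x in M. nn_cond_exp M F (\<lambda>x. \<Sum>i. f i x) x = (\<Sum>i. nn_cond_exp M F (f i) x)"
proof -
  have "AE x in M. (\<Sum>i. nn_cond_exp M F (f i) x) = nn_cond_exp M F (\<lambda>x. \<Sum>i. f i x) x"
  proof (rule nn_cond_exp_charact)
    fix A assume A[measurable]: "A \<in> sets F"
    then have AM[measurable]: "A \<in> sets M" by (meson subalg subalgebra_def subsetD)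
    have "(\<integral>\<^sup>+x\<in>A. (\<Sum>i. f i x) \<partial>M) = (\<Sum>i. \<integral>\<^sup>+x. f i x * indicator A x \<partial>M)"
      using assms by (subst nn_integral_suminf[symmetric]) (auto intro!: nn_integral_cong simp: ennreal_suminf_multc)
    also have "\<dots> = (\<Sum>i. \<integral>\<^sup>+x. indicator A x * nn_cond_exp M F (f i) x \<partial>M)"
      using assms by (subst nn_cond_exp_intg) (auto simp: mult.commute)
    also have "\<dots> = (\<integral>\<^sup>+x\<in>A. (\<Sum>i. nn_cond_exp M F (f i) x) \<partial>M)"
      by (subst nn_integral_suminf[symmetric]) (auto intro!: nn_integral_cong simp: ennreal_suminf_multc mult.commute)
    finally show "(\<integral>\<^sup>+x\<in>A. (\<Sum>i. f i x) \<partial>M) = (\<integral>\<^sup>+x\<in>A. (\<Sum>i. nn_cond_exp M F (f i) x) \<partial>M)" .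
  qed (use assms in auto)
  thus ?thesis by auto
qed

lemma ncs_const:
  shows "AE x in M. nn_cond_exp M F (\<lambda>x. c) x = c"
  using nn_cond_exp_F_meas[of "\<lambda>x. c"] by auto

end

lemma fms_intro:
  assumes "prob_space M" "subalgebra M F"
  shows "finite_measure_subalgebra M F"
  using assms unfolding finite_measure_subalgebra_def finite_measure_subalgebra_axioms_def
  by (auto simp: prob_space_def)



lemma rho_alt: "rho x y = \<bar>real (fst x) - real (fst y)\<bar> + \<bar>real (fst (snd x)) - real (fst (snd y))\<bar>
   + dist (snd (snd x)) (snd (snd y))"
  by (cases x; cases y) (auto simp: rho_def)

lemma rho_nonneg: "0 \<le> rho x y" unfolding rho_alt by simp

lemma rho_cont2: "continuous_on UNIV (\<lambda>z::'a::metric_space mark \<times> 'a mark. rho (fst z) (snd z))"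
  unfolding rho_alt by (intro continuous_intros)

lemma rho_cont: "continuous_on UNIV (\<lambda>y::'a::metric_space mark. rho x y)"
  unfolding rho_alt by (intro continuous_intros)

lemma rho_small:
  assumes "rho x y < 1"
  shows "fst x = fst y" "fst (snd x) = fst (snd y)" "dist (snd (snd x)) (snd (snd y)) \<le> rho x y"
proof -
  have a: "\<bar>real (fst x) - real (fst y)\<bar> < 1" and b: "\<bar>real (fst (snd x)) - real (fst (snd y))\<bar> < 1"
    using assms unfolding rho_alt by (simp_all add: add.assoc) (smt (verit) zero_le_dist abs_ge_zero)+
  from a show "fst x = fst y" by linarith
  from b show "fst (snd x) = fst (snd y)" by linarith
  show "dist (snd (snd x)) (snd (snd y)) \<le> rho x y" unfolding rho_alt by simp
qed

definition Stail :: "('a::metric_space mark \<Rightarrow> real) \<Rightarrow> nat \<Rightarrow> 'a mark set" where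
  "Stail \<phi> m = {y. \<exists>x. rho x y < 1 / (real m + 1) \<and> real m < \<phi> x}"

lemma Stail_open: "open (Stail \<phi> m)"
proof -
  have "Stail \<phi> m = (\<Union>x\<in>{x. real m < \<phi> x}. {y. rho x y < 1 / (real m + 1)})"
    unfolding Stail_def by auto
  moreover have "open {y. rho x y < 1 / (real m + 1)}" for x :: "'a mark"
    using continuous_on_open_vimage[OF open_UNIV, of "\<lambda>y. rho x y"] rho_cont[of x]
    by (auto intro!: open_Collect_less continuous_on_const)
  ultimately show ?thesis by auto
qed

lemma Stail_borel: "Stail \<phi> m \<in> sets borel"
  using Stail_open by (rule borel_open)

lemma Stail_decseq: "decseq (Stail \<phi>)"
proof (rule decseq_SucI)
  fix m
  show "Stail \<phi> (Suc m) \<subseteq> Stail \<phi> m"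
  proof
    fix y assume "y \<in> Stail \<phi> (Suc m)"
    then obtain x where x: "rho x y < 1 / (real (Suc m) + 1)" "real (Suc m) < \<phi> x" unfolding Stail_def by auto
    have "1 / (real (Suc m) + 1) \<le> 1 / (real m + 1)" by (intro divide_left_mono) auto
    with x have "rho x y < 1 / (real m + 1) \<and> real m < \<phi> x" by simp
    thus "y \<in> Stail \<phi> m" unfolding Stail_def by blast
  qed
qed

lemma Stail_Inter:
  assumes loc: "\<And>y. \<exists>r>0. \<exists>B. \<forall>x. rho x y < r \<longrightarrow> \<phi> x \<le> B"
  shows "(\<Inter>m. Stail \<phi> m) = {}"
proof (rule ccontr)
  assume "(\<Inter>m. Stail \<phi> m) \<noteq> {}"
  then obtain y where y: "\<And>m. y \<in> Stail \<phi> m" by blast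
  obtain r B where rB: "r > 0" "\<And>x. rho x y < r \<Longrightarrow> \<phi> x \<le> B" using loc[of y] by auto
  obtain m1 :: nat where m1: "1 / r < real m1" using reals_Archimedean2 by auto
  obtain m2 :: nat where m2: "B < real m2" using reals_Archimedean2 by auto
  define m where "m = max m1 m2"
  from y[of m] obtain x where x: "rho x y < 1 / (real m + 1)" "real m < \<phi> x" unfolding Stail_def by auto
  have "1 / r < real m + 1" using m1 unfolding m_def by linarith
  hence "1 < r * (real m + 1)" using rB(1) by (simp add: field_simps)
  hence "1 / (real m + 1) < r" by (simp add: field_simps)
  hence "\<phi> x \<le> B" using x rB by auto
  moreover have "B < real m" using m2 unfolding m_def by linarith
  ultimately show False using x by simp
qed

lemma Stail_lim:
  assumes "finite_measure N" "sets N = sets borel"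
    and loc: "\<And>y. \<exists>r>0. \<exists>B. \<forall>x. rho x y < r \<longrightarrow> \<phi> x \<le> B"
  shows "(\<lambda>m. emeasure N (Stail \<phi> m)) \<longlonglongrightarrow> 0"
proof -
  have "(\<lambda>m. emeasure N (Stail \<phi> m)) \<longlonglongrightarrow> emeasure N (\<Inter>m. Stail \<phi> m)"
    using assms Stail_borel Stail_decseq
    by (intro Lim_emeasure_decseq) (auto simp: finite_measure.emeasure_finite)
  thus ?thesis using Stail_Inter[OF loc] by simp
qed

lemma loc_bound_cont:
  fixes \<phi> :: "'a::metric_space mark \<Rightarrow> real"
  assumes "continuous_on UNIV \<phi>"
  shows "\<exists>r>0. \<exists>B. \<forall>x. rho x y < r \<longrightarrow> \<phi> x \<le> B"
proof -
  let ?U = "\<phi> -` {..<\<phi> y + 1}"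
  have "open ?U" using assms by (intro open_vimage) auto
  moreover have "y \<in> ?U" by simp
  ultimately obtain A1 B1 where AB1: "open A1" "open B1" "y \<in> A1 \<times> B1" "A1 \<times> B1 \<subseteq> ?U"
    by (rule open_prod_elim)
  have "snd y \<in> B1" using AB1(3) by (cases y) auto
  then obtain A2 B2 where AB2: "open A2" "open B2" "snd y \<in> A2 \<times> B2" "A2 \<times> B2 \<subseteq> B1"
    by (rule open_prod_elim[OF AB1(2)])
  have "snd (snd y) \<in> B2" using AB2(3) by (cases "snd y") auto
  then obtain r0 where r0: "r0 > 0" "\<And>b. dist b (snd (snd y)) < r0 \<Longrightarrow> b \<in> B2"
    using AB2(2) unfolding open_dist by blast
  show ?thesis
  proof (intro exI conjI allI impI)
    show "min 1 r0 > 0" using r0 by simp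
    fix x assume x: "rho x y < min 1 r0"
    hence x1: "rho x y < 1" by simp
    from rho_small[OF x1] have e: "fst x = fst y" "fst (snd x) = fst (snd y)"
      and d: "dist (snd (snd x)) (snd (snd y)) < r0" using x by auto
    have "snd (snd x) \<in> B2" using r0(2) d by auto
    hence "snd x \<in> A2 \<times> B2" using AB2(3) e by (cases "snd x") auto
    hence "snd x \<in> B1" using AB2 by auto
    hence "x \<in> A1 \<times> B1" using AB1(3) e by (cases x) auto
    hence "x \<in> ?U" using AB1 by auto
    thus "\<phi> x \<le> \<phi> y + 1" by simp
  qed
qed



definition hA :: "real \<Rightarrow> real \<Rightarrow> real \<Rightarrow> ennreal" where
  "hA p A x = (\<Sum>m. ennreal ((A + real m + 1) powr p) * indicator {A + real m <.. A + real m + 1} x)"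

lemma hA_meas[measurable]: "hA p A \<in> borel_measurable borel"
  unfolding hA_def by measurable

lemma hA_single:
  assumes "A < x"
  defines "k \<equiv> nat \<lceil>x - A\<rceil> - 1"
  shows "hA p A x = ennreal ((A + real k + 1) powr p)" "A + real k < x" "x \<le> A + real k + 1"
proof -
  have c1: "1 \<le> \<lceil>x - A\<rceil>" using assms by (simp add: one_le_ceiling)
  hence n1: "1 \<le> nat \<lceil>x - A\<rceil>" by linarith
  have kk: "real k + 1 = real_of_int \<lceil>x - A\<rceil>" unfolding k_def using n1 c1
    by (simp add: of_nat_diff)
  have ind: "x \<in> {A + real m <.. A + real m + 1} \<longleftrightarrow> m = k" for m
  proof -
    have "x \<in> {A + real m <.. A + real m + 1} \<longleftrightarrow> \<lceil>x - A\<rceil> = int m + 1"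
      by (simp add: ceiling_eq_iff) linarith
    also have "\<dots> \<longleftrightarrow> m = k" using kk by linarith
    finally show ?thesis .
  qed
  have "(\<lambda>m. ennreal ((A + real m + 1) powr p) * indicator {A + real m <.. A + real m + 1} x)
      = (\<lambda>m. if m = k then ennreal ((A + real k + 1) powr p) else 0)"
    using ind by (auto simp: indicator_def fun_eq_iff)
  thus "hA p A x = ennreal ((A + real k + 1) powr p)" unfolding hA_def
    using sums_single[of k "\<lambda>_. ennreal ((A + real k + 1) powr p)"] by (simp add: sums_iff)
  show "A + real k < x" "x \<le> A + real k + 1" using ind[of k] by auto
qed

lemma hA_zero: "x \<le> A \<Longrightarrow> hA p A x = 0"
  unfolding hA_def by (auto simp: indicator_def)

lemma hA_lower:
  assumes "0 < p" "0 \<le> x"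
  shows "ennreal (x powr p * indicator {A<..} x) \<le> hA p A x"
proof (cases "A < x")
  case True
  note h = hA_single(1)[OF True, where p=p] hA_single(2,3)[OF True]
  have "x powr p \<le> (A + real (nat \<lceil>x - A\<rceil> - 1) + 1) powr p"
    using assms h by (intro powr_mono2) auto
  thus ?thesis using True h by (simp add: indicator_def)
qed (simp add: indicator_def)

lemma hA_upper:
  assumes "0 < p" "A < x" "0 \<le> A"
  shows "hA p A x \<le> ennreal ((x + 1) powr p)"
proof -
  note h = hA_single(1)[OF assms(2), where p=p] hA_single(2,3)[OF assms(2)]
  have "(A + real (nat \<lceil>x - A\<rceil> - 1) + 1) powr p \<le> (x + 1) powr p"
    using assms h by (intro powr_mono2) auto
  thus ?thesis using h by simp
qed

lemma pw_bound:
  fixes x y A p :: real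
  assumes p: "0 < p" and A: "2 \<le> A" and x: "A < x"
  shows "(x + 1) powr p \<le> 2 powr p * (1 + 2 powr p) * \<bar>x - y\<bar> powr p
      + 2 powr p * ((\<bar>y\<bar> + 1) powr p * indicator {t. A/2 < \<bar>t\<bar>} y)"
proof -
  define a where "a = \<bar>x - y\<bar>"
  define b where "b = \<bar>y\<bar> + 1"
  define c where "c = (2::real) powr p"
  have a0: "0 \<le> a" and b0: "0 < b" unfolding a_def b_def by auto
  have c0: "0 < c" unfolding c_def by simp
  have "x + 1 \<le> a + b" unfolding a_def b_def by linarith
  hence "(x + 1) powr p \<le> (a + b) powr p" using x A p by (intro powr_mono2) auto
  also have "\<dots> \<le> (2 * max a b) powr p" using a0 b0 p by (intro powr_mono2) auto
  also have "\<dots> = c * max a b powr p" unfolding c_def using a0 b0 by (simp add: powr_mult)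
  also have "max a b powr p \<le> a powr p + b powr p"
    by (cases "a \<le> b") (auto simp: max_def)
  finally have main: "(x + 1) powr p \<le> c * (a powr p + b powr p)" using c0
    by (smt (verit) mult_left_mono)
  show ?thesis
  proof (cases "A/2 < \<bar>y\<bar>")
    case True
    have "c * (a powr p + b powr p) \<le> c * (1 + c) * a powr p + c * b powr p"
      using c0 by (simp add: algebra_simps)
    thus ?thesis using main True unfolding a_def b_def c_def by (simp add: indicator_def)
  next
    case False
    have ax: "x - \<bar>y\<bar> \<le> a" unfolding a_def by (cases "0 \<le> y") auto
    hence "1 \<le> a" "b \<le> 2 * a" unfolding b_def using x A False by linarith+
    hence "b powr p \<le> (2 * a) powr p" using b0 p by (intro powr_mono2) auto
    also have "\<dots> = c * a powr p" unfolding c_def using a0 by (simp add: powr_mult)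
    finally have "c * (a powr p + b powr p) \<le> c * (1 + c) * a powr p"
      using c0 by (simp add: algebra_simps)
    hence "(x + 1) powr p \<le> c * (1 + c) * a powr p" using main by linarith
    thus ?thesis using False unfolding a_def c_def by (simp add: indicator_def)
  qed
qed



lemma le_INF_aff:
  fixes X b :: ennreal and a :: real
  assumes H: "\<And>\<pi>. \<pi> \<in> C \<Longrightarrow> X \<le> ennreal a * I \<pi> + b" and a: "0 < a"
  shows "X \<le> ennreal a * (INF \<pi>\<in>C. I \<pi>) + b"
proof (rule ennreal_le_epsilon)
  fix e :: real assume top: "ennreal a * (INF \<pi>\<in>C. I \<pi>) + b < top" and e: "0 < e"
  hence "(INF \<pi>\<in>C. I \<pi>) < top" using a by (auto simp: ennreal_mult_less_top)
  hence "(INF \<pi>\<in>C. I \<pi>) < (INF \<pi>\<in>C. I \<pi>) + ennreal (e / a)"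
    using e a by (simp add: ennreal_add_left_cancel_less less_top[symmetric])
  then obtain \<pi> where \<pi>: "\<pi> \<in> C" "I \<pi> < (INF \<pi>\<in>C. I \<pi>) + ennreal (e / a)"
    unfolding INF_less_iff by auto
  have "X \<le> ennreal a * I \<pi> + b" using H \<pi> by auto
  also have "\<dots> \<le> ennreal a * ((INF \<pi>\<in>C. I \<pi>) + ennreal (e / a)) + b"
    using \<pi> by (intro add_mono mult_left_mono) auto
  also have "\<dots> = ennreal a * (INF \<pi>\<in>C. I \<pi>) + b + ennreal e"
    using a e by (simp add: distrib_left ennreal_mult[symmetric] algebra_simps del: ennreal_mult)
  finally show "X \<le> ennreal a * (INF \<pi>\<in>C. I \<pi>) + b + ennreal e" .
qed

definition tailL :: "real \<Rightarrow> real measure \<Rightarrow> real \<Rightarrow> ennreal" where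
  "tailL p L A = (\<integral>\<^sup>+ y. ennreal ((\<bar>y\<bar> + 1) powr p * indicator {t. A/2 < \<bar>t\<bar>} y) \<partial>L)"

lemma coupling_bound:
  assumes p: "0 < p" and A: "2 \<le> A" and \<pi>: "\<pi> \<in> couplings \<kappa> L"
  shows "(\<integral>\<^sup>+ x. hA p A x \<partial>\<kappa>) \<le> ennreal (2 powr p * (1 + 2 powr p)) * (\<integral>\<^sup>+ z. ennreal (\<bar>fst z - snd z\<bar> powr p) \<partial>\<pi>)
     + ennreal (2 powr p) * tailL p L A"
proof -
  have sp: "sets \<pi> = sets (borel :: (real \<times> real) measure)"
  proof -
    have "sets \<pi> = sets (borel \<Otimes>\<^sub>M borel :: (real \<times> real) measure)" using \<pi> unfolding couplings_def by auto
    thus ?thesis by (simp only: borel_prod)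
  qed
  have mf[measurable]: "fst \<in> measurable \<pi> borel" "snd \<in> measurable \<pi> borel"
    by (simp_all add: measurable_cong_sets[OF sp refl])
       (intro borel_measurable_continuous_onI continuous_intros)+
  have k: "\<kappa> = distr \<pi> borel fst" and l: "L = distr \<pi> borel snd" using \<pi> unfolding couplings_def by auto
  have mc[measurable]: "(\<lambda>z. \<bar>fst z - snd z\<bar> powr p) \<in> borel_measurable \<pi>" by measurable
  have "(\<integral>\<^sup>+ x. hA p A x \<partial>\<kappa>) = (\<integral>\<^sup>+ z. hA p A (fst z) \<partial>\<pi>)"
    unfolding k by (rule nn_integral_distr) auto
  also have "\<dots> \<le> (\<integral>\<^sup>+ z. ennreal (2 powr p * (1 + 2 powr p)) * ennreal (\<bar>fst z - snd z\<bar> powr p)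
      + ennreal (2 powr p) * ennreal ((\<bar>snd z\<bar> + 1) powr p * indicator {t. A/2 < \<bar>t\<bar>} (snd z)) \<partial>\<pi>)"
  proof (rule nn_integral_mono)
    fix z :: "real \<times> real"
    show "hA p A (fst z) \<le> ennreal (2 powr p * (1 + 2 powr p)) * ennreal (\<bar>fst z - snd z\<bar> powr p)
      + ennreal (2 powr p) * ennreal ((\<bar>snd z\<bar> + 1) powr p * indicator {t. A/2 < \<bar>t\<bar>} (snd z))"
    proof (cases "A < fst z")
      case True
      have "hA p A (fst z) \<le> ennreal ((fst z + 1) powr p)" using True p A by (intro hA_upper) auto
      also have "\<dots> \<le> ennreal (2 powr p * (1 + 2 powr p) * \<bar>fst z - snd z\<bar> powr p
      + 2 powr p * ((\<bar>snd z\<bar> + 1) powr p * indicator {t. A/2 < \<bar>t\<bar>} (snd z)))"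
        using pw_bound[OF p A True] by (intro ennreal_leI) auto
      also have "\<dots> = ennreal (2 powr p * (1 + 2 powr p)) * ennreal (\<bar>fst z - snd z\<bar> powr p)
      + ennreal (2 powr p) * ennreal ((\<bar>snd z\<bar> + 1) powr p * indicator {t. A/2 < \<bar>t\<bar>} (snd z))"
        by (subst ennreal_plus) (auto simp: ennreal_mult[symmetric] simp del: ennreal_plus)
      finally show ?thesis .
    qed (simp add: hA_zero)
  qed
  also have "\<dots> = ennreal (2 powr p * (1 + 2 powr p)) * (\<integral>\<^sup>+ z. ennreal (\<bar>fst z - snd z\<bar> powr p) \<partial>\<pi>)
     + ennreal (2 powr p) * (\<integral>\<^sup>+ z. ennreal ((\<bar>snd z\<bar> + 1) powr p * indicator {t. A/2 < \<bar>t\<bar>} (snd z)) \<partial>\<pi>)"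
    by (subst nn_integral_add) (auto simp: nn_integral_cmult)
  also have "(\<integral>\<^sup>+ z. ennreal ((\<bar>snd z\<bar> + 1) powr p * indicator {t. A/2 < \<bar>t\<bar>} (snd z)) \<partial>\<pi>) = tailL p L A"
    unfolding tailL_def l by (rule nn_integral_distr[symmetric]) auto
  finally show ?thesis .
qed

lemma tailL_lim:
  assumes p: "0 < p" and sL: "sets L = sets borel" and fin: "(\<integral>\<^sup>+ y. ennreal ((\<bar>y\<bar> + 1) powr p) \<partial>L) < \<infinity>"
  shows "(\<lambda>a::nat. tailL p L (real a)) \<longlonglongrightarrow> 0"
proof -
  define f where "f = (\<lambda>(a::nat) y. ennreal ((\<bar>y\<bar> + 1) powr p * indicator {t. real a/2 < \<bar>t\<bar>} y))"
  have dec: "decseq f"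
  proof (rule decseq_SucI, rule le_funI)
    fix a :: nat and y :: real
    show "f (Suc a) y \<le> f a y" unfolding f_def by (auto simp: indicator_def intro!: ennreal_leI)
  qed
  have mf: "f a \<in> borel_measurable L" for a
    unfolding f_def measurable_cong_sets[OF sL refl] by measurable
  have fin0: "(\<integral>\<^sup>+ y. f 0 y \<partial>L) < \<infinity>"
    using fin by (rule le_less_trans[rotated]) (auto simp: f_def indicator_def intro!: nn_integral_mono ennreal_leI)
  have inf0: "(INF a. f a y) = 0" for y
  proof -
    obtain a :: nat where "2 * \<bar>y\<bar> < real a" using reals_Archimedean2 by auto
    hence "f a y = 0" unfolding f_def by (simp add: indicator_def)
    hence "(INF a. f a y) \<le> 0" by (metis INF_lower UNIV_I)
    thus ?thesis by simp
  qed
  have "(\<lambda>a. integral\<^sup>N L (f a)) \<longlonglongrightarrow> (INF a. integral\<^sup>N L (f a))"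
    by (rule LIMSEQ_INF) (auto simp: decseq_def intro!: nn_integral_mono dest: decseqD[OF dec] le_funD)
  also have "(INF a. integral\<^sup>N L (f a)) = (\<integral>\<^sup>+ y. (INF a. f a y) \<partial>L)"
    by (rule nn_integral_monotone_convergence_INF_decseq[symmetric, OF dec mf fin0])
  also have "\<dots> = 0" by (simp add: inf0)
  finally show ?thesis unfolding f_def tailL_def by simp
qed



lemma b_link:
  assumes M: "prob_space M" and sub: "subalgebra M F" and cl: "cond_law_mix M F n Y \<kappa>"
    and Ym[measurable]: "\<And>i. Y i \<in> borel_measurable M"
  shows "AE \<omega> in M. ennreal (1 / real n) * (\<Sum>i\<in>{1..n}. nn_cond_exp M F (\<lambda>\<omega>. hA p A (Y i \<omega>)) \<omega>)
      = (\<integral>\<^sup>+ x. hA p A x \<partial>\<kappa> \<omega>)"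
proof -
  interpret finite_measure_subalgebra M F by (rule fms_intro[OF M sub])
  define c where "c = (\<lambda>m::nat. ennreal ((A + real m + 1) powr p))"
  define B where "B = (\<lambda>m::nat. {A + real m <.. A + real m + 1})"
  define ind where "ind = (\<lambda>i m. indicator {\<omega> \<in> space M. Y i \<omega> \<in> B m} :: 'a \<Rightarrow> ennreal)"
  have Bb: "B m \<in> sets borel" for m unfolding B_def by simp
  have indm[measurable]: "ind i m \<in> borel_measurable M" for i m
    unfolding ind_def B_def by measurable
  have A1: "AE \<omega> in M. \<forall>m. emeasure (\<kappa> \<omega>) (B m) = ennreal (1 / real n) * (\<Sum>i\<in>{1..n}. nn_cond_exp M F (ind i m) \<omega>)"
    unfolding AE_all_countable ind_def using cl Bb unfolding cond_law_mix_def by auto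
  have A2: "AE \<omega> in M. nn_cond_exp M F (\<lambda>\<omega>. hA p A (Y i \<omega>)) \<omega> = (\<Sum>m. c m * nn_cond_exp M F (ind i m) \<omega>)" for i
  proof -
    have e1: "AE \<omega> in M. nn_cond_exp M F (\<lambda>\<omega>. hA p A (Y i \<omega>)) \<omega> = nn_cond_exp M F (\<lambda>\<omega>. \<Sum>m. c m * ind i m \<omega>) \<omega>"
      by (rule nn_cond_exp_cong) (auto simp: hA_def c_def ind_def B_def indicator_def)
    have e2: "AE \<omega> in M. nn_cond_exp M F (\<lambda>\<omega>. \<Sum>m. c m * ind i m \<omega>) \<omega> = (\<Sum>m. nn_cond_exp M F (\<lambda>\<omega>. c m * ind i m \<omega>) \<omega>)"
      by (rule ncs_suminf) auto
    have e3: "AE \<omega> in M. \<forall>m. nn_cond_exp M F (\<lambda>\<omega>. c m * ind i m \<omega>) \<omega> = c m * nn_cond_exp M F (ind i m) \<omega>"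
      unfolding AE_all_countable by (auto intro: ncs_cmult)
    from e1 e2 e3 show ?thesis by eventually_elim auto
  qed
  have A3: "AE \<omega> in M. \<forall>i\<in>{1..n}. nn_cond_exp M F (\<lambda>\<omega>. hA p A (Y i \<omega>)) \<omega> = (\<Sum>m. c m * nn_cond_exp M F (ind i m) \<omega>)"
    by (subst AE_finite_all) (auto intro: A2)
  have A4: "AE \<omega> in M. \<omega> \<in> space M" by simp
  from A1 A3 A4 show ?thesis
  proof eventually_elim
    case (elim \<omega>)
    have sk: "sets (\<kappa> \<omega>) = sets borel" using cl elim unfolding cond_law_mix_def by auto
    have "(\<integral>\<^sup>+ x. hA p A x \<partial>\<kappa> \<omega>) = (\<integral>\<^sup>+ x. (\<Sum>m. c m * indicator (B m) x) \<partial>\<kappa> \<omega>)"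
      unfolding hA_def c_def B_def ..
    also have "\<dots> = (\<Sum>m. \<integral>\<^sup>+ x. c m * indicator (B m) x \<partial>\<kappa> \<omega>)"
      by (rule nn_integral_suminf) (auto simp: measurable_cong_sets[OF sk refl] B_def)
    also have "\<dots> = (\<Sum>m. c m * emeasure (\<kappa> \<omega>) (B m))"
      by (subst nn_integral_cmult_indicator) (auto simp: sk Bb)
    also have "\<dots> = (\<Sum>m. c m * (ennreal (1 / real n) * (\<Sum>i\<in>{1..n}. nn_cond_exp M F (ind i m) \<omega>)))"
      using elim by simp
    also have "\<dots> = ennreal (1 / real n) * (\<Sum>m. \<Sum>i\<in>{1..n}. c m * nn_cond_exp M F (ind i m) \<omega>)"
      by (simp only: sum_distrib_left ennreal_suminf_cmult[symmetric]) (simp add: mult.left_commute)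
    also have "\<dots> = ennreal (1 / real n) * (\<Sum>i\<in>{1..n}. \<Sum>m. c m * nn_cond_exp M F (ind i m) \<omega>)"
      by (subst suminf_sum) auto
    also have "\<dots> = ennreal (1 / real n) * (\<Sum>i\<in>{1..n}. nn_cond_exp M F (\<lambda>\<omega>. hA p A (Y i \<omega>)) \<omega>)"
      using elim by simp
    finally show ?case by simp
  qed
qed



lemma opnorm_use:
  assumes p: "0 < p" and op: "opnorm_p p n C \<le> ennreal K" and K: "0 \<le> K"
    and T: "T \<subseteq> {1..n}" and C: "\<And>i j. 0 \<le> C i j"
  shows "(\<Sum>i\<in>{1..n}. (\<Sum>j\<in>T. C i j) powr p) \<le> K powr p * real (card T)"
proof (cases "T = {}")
  case True thus ?thesis using p K by simp
next
  case False
  have fT: "finite T" using T finite_subset by blast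
  define t where "t = real (card T)"
  have t0: "0 < t" unfolding t_def using fT False by (simp add: card_gt_0_iff)
  define s where "s = t powr (1/p)"
  have s0: "0 < s" unfolding s_def using t0 by simp
  have sp: "s powr p = t" unfolding s_def using t0 p by (simp add: powr_powr)
  define x where "x = (\<lambda>j. indicator T j / s :: real)"
  have "(\<Sum>j\<in>{1..n}. \<bar>x j\<bar> powr p) = (\<Sum>j\<in>T. (1 / s) powr p)"
    unfolding x_def using T s0 by (intro sum.mono_neutral_cong_right) (auto simp: indicator_def)
  also have "\<dots> = t * (1 / t)" using s0 sp t_def by (simp add: powr_divide)
  also have "\<dots> = 1" using t0 by simp
  finally have xn: "(\<Sum>j\<in>{1..n}. \<bar>x j\<bar> powr p) \<le> 1" by simp
  define S where "S = (\<lambda>i. \<Sum>j\<in>T. C i j)"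
  have S0: "0 \<le> S i" for i unfolding S_def using C by (simp add: sum_nonneg)
  have Cx: "(\<Sum>j\<in>{1..n}. C i j * x j) = S i / s" for i
  proof -
    have "(\<Sum>j\<in>{1..n}. C i j * x j) = (\<Sum>j\<in>T. C i j / s)"
      unfolding x_def using T by (intro sum.mono_neutral_cong_right) (auto simp: indicator_def)
    thus ?thesis unfolding S_def by (simp add: sum_divide_distrib)
  qed
  define Q where "Q = (\<Sum>i\<in>{1..n}. \<bar>S i / s\<bar> powr p)"
  have Q0: "0 \<le> Q" unfolding Q_def by (simp add: sum_nonneg)
  have "ennreal (Q powr (1/p)) \<le> opnorm_p p n C"
    unfolding opnorm_p_def Q_def using xn by (intro SUP_upper2[of x]) (auto simp only: Cx mem_Collect_eq order_refl)
  with op have "ennreal (Q powr (1/p)) \<le> ennreal K" by simp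
  hence "Q powr (1/p) \<le> K" using K by (simp add: ennreal_le_iff)
  hence "(Q powr (1/p)) powr p \<le> K powr p" using p by (intro powr_mono2) auto
  hence Qle: "Q \<le> K powr p" using p Q0 by (simp add: powr_powr)
  have "Q = (\<Sum>i\<in>{1..n}. S i powr p) / t"
    unfolding Q_def using S0 s0 sp by (simp add: powr_divide sum_divide_distrib)
  with Qle t0 have "(\<Sum>i\<in>{1..n}. S i powr p) \<le> K powr p * t" by (simp add: divide_le_eq)
  thus ?thesis unfolding S_def t_def .
qed



lemma pow_split:
  fixes a b p :: real
  assumes "0 < p" "0 \<le> a" "0 \<le> b"
  shows "(a + b) powr p \<le> 2 powr p * (a powr p + b powr p)"
proof -
  have "(a + b) powr p \<le> (2 * max a b) powr p" using assms by (intro powr_mono2) auto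
  also have "\<dots> = 2 powr p * max a b powr p" using assms by (simp add: powr_mult)
  also have "max a b powr p \<le> a powr p + b powr p" by (cases "a \<le> b") (auto simp: max_def)
  finally show ?thesis by (smt (verit) mult_left_mono powr_ge_zero)
qed

lemma pw_main:
  fixes J J' s m A p f Cx Y :: real
  assumes p: "0 < p" and J: "0 \<le> J" "J \<le> J'" "J' = 0 \<or> J' = 1" and s: "0 \<le> s" and m: "0 \<le> m"
    and A: "0 \<le> A" and Y: "0 \<le> Y" "Y \<le> m * f + Cx" and f: "0 \<le> f" and Cx: "0 \<le> Cx"
  shows "(J * Y) powr p \<le> 2 powr p * m powr p * A powr p * J' + 2 powr p * m powr p * (f powr p * indicator {A<..} f)
     + 2 powr p * Cx powr p"
proof -
  have "J * Y \<le> J' * m * f + Cx"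
  proof -
    have "J * Y \<le> J' * Y" using J Y by (intro mult_right_mono) auto
    also have "\<dots> \<le> J' * (m * f + Cx)" using J Y by (intro mult_left_mono) auto
    also have "\<dots> \<le> J' * m * f + Cx" using J Cx by (auto simp: algebra_simps)
    finally show ?thesis .
  qed
  hence "(J * Y) powr p \<le> (J' * m * f + Cx) powr p" using J Y p by (intro powr_mono2) auto
  also have "\<dots> \<le> 2 powr p * ((J' * m * f) powr p + Cx powr p)"
    using J m f Cx p by (intro pow_split) auto
  also have "(J' * m * f) powr p = J' * (m powr p * f powr p)" using J m f by (auto simp: powr_mult)
  also have "J' * f powr p \<le> A powr p * J' + f powr p * indicator {A<..} f"
  proof (cases "A < f")
    case True thus ?thesis using J by (auto simp: indicator_def)
  next
    case False
    hence "f powr p \<le> A powr p" using f p by (intro powr_mono2) auto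
    thus ?thesis using J by (auto simp: indicator_def)
  qed
  hence "J' * (m powr p * f powr p) \<le> m powr p * (A powr p * J' + f powr p * indicator {A<..} f)"
    by (smt (verit) mult.left_commute mult_left_mono powr_ge_zero)
  finally show ?thesis
    by (smt (verit) distrib_left mult.assoc mult_left_mono powr_ge_zero)
qed

lemma Jr_cond:
  assumes M: "prob_space M" and sub: "subalgebra M F" and S: "S \<subseteq> space M"
  defines "Jr \<equiv> (\<lambda>\<omega>. if S \<in> sets M then indicator (space M - S) \<omega> else 1 :: real)"
  shows "AE \<omega> in M. nn_cond_exp M F (\<lambda>\<omega>. ennreal (Jr \<omega>)) \<omega> = ennreal (1 - real_cond_exp M F (indicator S) \<omega>)
     \<and> real_cond_exp M F (indicator S) \<omega> \<le> 1 \<and> 0 \<le> real_cond_exp M F (indicator S) \<omega>"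
proof -
  interpret finite_measure_subalgebra M F by (rule fms_intro[OF M sub])
  have neg: "(\<lambda>x. ennreal (- indicator S x)) = (\<lambda>x. 0)" by (auto simp: fun_eq_iff indicator_def ennreal_neg)
  have z: "AE \<omega> in M. nn_cond_exp M F (\<lambda>x. ennreal (- indicator S x)) \<omega> = 0"
    unfolding neg using ncs_const[of 0] by simp
  show ?thesis
  proof (cases "S \<in> sets M")
    case True
    have i1[measurable]: "(indicator S :: _ \<Rightarrow> real) \<in> borel_measurable M" by (rule borel_measurable_indicator[OF True])
    have i2[measurable]: "(indicator (space M - S) :: _ \<Rightarrow> real) \<in> borel_measurable M"
      by (rule borel_measurable_indicator) (use True in auto)
    have m1[measurable]: "(\<lambda>x. ennreal (indicator S x)) \<in> borel_measurable M"
      using measurable_compose[OF i1 measurable_ennreal] by (simp add: o_def)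
    have m2[measurable]: "(\<lambda>x. ennreal (indicator (space M - S) x)) \<in> borel_measurable M"
      using measurable_compose[OF i2 measurable_ennreal] by (simp add: o_def)
    have s: "AE \<omega> in M. nn_cond_exp M F (\<lambda>x. ennreal (indicator S x)) \<omega> + nn_cond_exp M F (\<lambda>x. ennreal (indicator (space M - S) x)) \<omega>
       = nn_cond_exp M F (\<lambda>x. ennreal (indicator S x) + ennreal (indicator (space M - S) x)) \<omega>"
      by (rule nn_cond_exp_sum) auto
    have c: "AE \<omega> in M. nn_cond_exp M F (\<lambda>x. ennreal (indicator S x) + ennreal (indicator (space M - S) x)) \<omega>
       = nn_cond_exp M F (\<lambda>x. 1) \<omega>"
      by (rule nn_cond_exp_cong[OF _ borel_measurable_add[OF m1 m2]]) (use S in \<open>auto simp: indicator_def\<close>)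
    have o: "AE \<omega> in M. nn_cond_exp M F (\<lambda>x. 1) \<omega> = 1" using ncs_const[of 1] by simp
    from s c o z show ?thesis
    proof eventually_elim
      case (elim \<omega>)
      define a where "a = nn_cond_exp M F (\<lambda>x. ennreal (indicator S x)) \<omega>"
      define b where "b = nn_cond_exp M F (\<lambda>x. ennreal (indicator (space M - S) x)) \<omega>"
      have ab: "a + b = 1" using elim unfolding a_def b_def by simp
      hence "a \<noteq> top" "b \<noteq> top" by auto
      then obtain ra rb where r: "a = ennreal ra" "b = ennreal rb" "0 \<le> ra" "0 \<le> rb" by (metis ennreal_cases)
      hence "ra + rb = 1" using ab by (metis ennreal_1 ennreal_inj ennreal_plus add_nonneg_nonneg zero_le_one)
      have rce: "real_cond_exp M F (indicator S) \<omega> = ra"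
        unfolding real_cond_exp_def using elim r a_def by simp
      have "nn_cond_exp M F (\<lambda>\<omega>. ennreal (Jr \<omega>)) \<omega> = b" unfolding Jr_def b_def using True by simp
      thus ?case using rce r \<open>ra + rb = 1\<close> by (simp add: eq_diff_eq)
    qed
  next
    case False
    have nm: "(\<lambda>x. ennreal (indicator S x)) \<notin> borel_measurable M"
    proof
      assume "(\<lambda>x. ennreal (indicator S x)) \<in> borel_measurable M"
      hence "{x \<in> space M. ennreal (indicator S x) = 1} \<in> sets M" by measurable
      moreover have "{x \<in> space M. ennreal (indicator S x) = 1} = S" using S by (auto simp: indicator_def)
      ultimately show False using False by simp
    qed
    hence "nn_cond_exp M F (\<lambda>x. ennreal (indicator S x)) = (\<lambda>_. 0)" unfolding nn_cond_exp_def by auto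
    moreover have "AE \<omega> in M. nn_cond_exp M F (\<lambda>x. ennreal 1) \<omega> = 1" using ncs_const[of 1] by simp
    ultimately show ?thesis using z unfolding Jr_def real_cond_exp_def using False by auto
  qed
qed

lemma (in finite_measure_subalgebra) ncs_lin4:
  assumes [measurable]: "a \<in> borel_measurable M" "b \<in> borel_measurable M" "c \<in> borel_measurable M" "d \<in> borel_measurable M"
  shows "AE x in M. nn_cond_exp M F (\<lambda>x. \<alpha> * a x + \<beta> * b x + \<gamma> * c x + \<delta> * d x) x
    = \<alpha> * nn_cond_exp M F a x + \<beta> * nn_cond_exp M F b x + \<gamma> * nn_cond_exp M F c x + \<delta> * nn_cond_exp M F d x"
proof -
  have 1: "AE x in M. nn_cond_exp M F (\<lambda>x. \<alpha> * a x + \<beta> * b x + \<gamma> * c x) x + nn_cond_exp M F (\<lambda>x. \<delta> * d x) x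
     = nn_cond_exp M F (\<lambda>x. \<alpha> * a x + \<beta> * b x + \<gamma> * c x + \<delta> * d x) x"
    by (rule nn_cond_exp_sum) auto
  have 2: "AE x in M. nn_cond_exp M F (\<lambda>x. \<alpha> * a x + \<beta> * b x) x + nn_cond_exp M F (\<lambda>x. \<gamma> * c x) x
     = nn_cond_exp M F (\<lambda>x. \<alpha> * a x + \<beta> * b x + \<gamma> * c x) x"
    by (rule nn_cond_exp_sum) auto
  have 3: "AE x in M. nn_cond_exp M F (\<lambda>x. \<alpha> * a x) x + nn_cond_exp M F (\<lambda>x. \<beta> * b x) x
     = nn_cond_exp M F (\<lambda>x. \<alpha> * a x + \<beta> * b x) x"
    by (rule nn_cond_exp_sum) auto
  have 4: "AE x in M. nn_cond_exp M F (\<lambda>x. \<alpha> * a x) x = \<alpha> * nn_cond_exp M F a x" by (rule ncs_cmult) auto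
  have 5: "AE x in M. nn_cond_exp M F (\<lambda>x. \<beta> * b x) x = \<beta> * nn_cond_exp M F b x" by (rule ncs_cmult) auto
  have 6: "AE x in M. nn_cond_exp M F (\<lambda>x. \<gamma> * c x) x = \<gamma> * nn_cond_exp M F c x" by (rule ncs_cmult) auto
  have 7: "AE x in M. nn_cond_exp M F (\<lambda>x. \<delta> * d x) x = \<delta> * nn_cond_exp M F d x" by (rule ncs_cmult) auto
  from 1 2 3 4 5 6 7 show ?thesis by eventually_elim simp
qed

lemma op_markov:
  assumes "X \<in> borel_measurable M" "0 < \<delta>"
  shows "outer_prob M {\<omega> \<in> space M. ennreal \<delta> < X \<omega>} \<le> ennreal (1 / \<delta>) * (\<integral>\<^sup>+ \<omega>. X \<omega> \<partial>M)"
proof -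
  have "outer_prob M {\<omega> \<in> space M. ennreal \<delta> < X \<omega>} \<le> emeasure M {\<omega> \<in> space M. 1 \<le> ennreal (1 / \<delta>) * X \<omega>}"
  proof (rule op_le)
    show "{\<omega> \<in> space M. 1 \<le> ennreal (1 / \<delta>) * X \<omega>} \<in> sets M" using assms by measurable
    show "{\<omega> \<in> space M. ennreal \<delta> < X \<omega>} \<subseteq> {\<omega> \<in> space M. 1 \<le> ennreal (1 / \<delta>) * X \<omega>}"
    proof safe
      fix \<omega> assume "ennreal \<delta> < X \<omega>"
      hence "ennreal (1 / \<delta>) * ennreal \<delta> \<le> ennreal (1 / \<delta>) * X \<omega>" by (intro mult_left_mono) auto
      thus "1 \<le> ennreal (1 / \<delta>) * X \<omega>" using assms by (simp add: ennreal_mult[symmetric] del: ennreal_mult)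
    qed
  qed
  also have "\<dots> \<le> ennreal (1 / \<delta>) * (\<integral>\<^sup>+ \<omega>. X \<omega> * indicator (space M) \<omega> \<partial>M)"
    using assms by (intro nn_integral_Markov_inequality) auto
  also have "(\<integral>\<^sup>+ \<omega>. X \<omega> * indicator (space M) \<omega> \<partial>M) = (\<integral>\<^sup>+ \<omega>. X \<omega> \<partial>M)"
    by (intro nn_integral_cong) auto
  finally show ?thesis .
qed

lemma conv_enn0_cmult:
  assumes c: "conv_prob_enn0 M X" and c0: "0 \<le> c"
  shows "conv_prob_enn0 M (\<lambda>n \<omega>. ennreal c * X n \<omega>)"
proof (cases "c = 0")
  case True
  have "outer_prob M {} = 0" using op_le[of "{}" M "{}"] by simp
  thus ?thesis using True unfolding conv_prob_enn0_def by simp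
next
  case False
  hence cp: "0 < c" using c0 by simp
  show ?thesis unfolding conv_prob_enn0_def
  proof (intro allI impI)
    fix \<delta> :: real assume d: "0 < \<delta>"
    have sub: "{\<omega> \<in> space M. ennreal \<delta> < ennreal c * X n \<omega>} \<subseteq> {\<omega> \<in> space M. ennreal (\<delta> / c) < X n \<omega>}" for n
    proof safe
      fix \<omega> assume h: "ennreal \<delta> < ennreal c * X n \<omega>"
      show "ennreal (\<delta> / c) < X n \<omega>"
      proof (rule ccontr)
        assume "\<not> ennreal (\<delta> / c) < X n \<omega>"
        hence "X n \<omega> \<le> ennreal (\<delta> / c)" by simp
        hence "ennreal c * X n \<omega> \<le> ennreal c * ennreal (\<delta> / c)" by (intro mult_left_mono) auto
        also have "\<dots> = ennreal (c * (\<delta> / c))" using cp d by (subst ennreal_mult) auto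
        also have "\<dots> = ennreal \<delta>" using cp by simp
        finally show False using h by simp
      qed
    qed
    have L: "((\<lambda>n. outer_prob M {\<omega> \<in> space M. ennreal (\<delta> / c) < X n \<omega>}) \<longlongrightarrow> 0) sequentially"
      using c d cp unfolding conv_prob_enn0_def by auto
    show "((\<lambda>n. outer_prob M {\<omega> \<in> space M. ennreal \<delta> < ennreal c * X n \<omega>}) \<longlongrightarrow> 0) sequentially"
    proof (rule tendsto_sandwich[of "\<lambda>_. 0" _ _ "\<lambda>n. outer_prob M {\<omega> \<in> space M. ennreal (\<delta> / c) < X n \<omega>}"])
      show "\<forall>\<^sub>F n in sequentially. outer_prob M {\<omega> \<in> space M. ennreal \<delta> < ennreal c * X n \<omega>}
          \<le> outer_prob M {\<omega> \<in> space M. ennreal (\<delta> / c) < X n \<omega>}"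
        by (intro always_eventually allI op_mono[OF sub])
    qed (use L in auto)
  qed
qed



lemma rho_meas:
  fixes U V :: "'w \<Rightarrow> 'a::{metric_space, second_countable_topology} mark"
  assumes "U \<in> borel_measurable M" "V \<in> borel_measurable M"
  shows "(\<lambda>\<omega>. rho (U \<omega>) (V \<omega>)) \<in> borel_measurable M"
proof -
  have "(\<lambda>\<omega>. (U \<omega>, V \<omega>)) \<in> borel_measurable M" using assms by (intro borel_measurable_Pair)
  from measurable_compose[OF this borel_measurable_continuous_onI[OF rho_cont2]]
  show ?thesis by simp
qed

lemma Zbound:
  fixes M :: "'w measure"
    and attr :: "nat \<Rightarrow> nat \<Rightarrow> 'w \<Rightarrow> 'a::{metric_space, second_countable_topology}"
    and E :: "nat \<Rightarrow> nat \<Rightarrow> nat \<Rightarrow> 'w \<Rightarrow> nat"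
    and \<phi> \<sigma>m :: "'a mark \<Rightarrow> real" and m :: nat and k :: nat and \<epsilon> :: real
    and \<theta> :: "nat \<Rightarrow> nat \<Rightarrow> nat list \<Rightarrow> 'w \<Rightarrow> nat" and Xt :: "nat \<Rightarrow> nat \<Rightarrow> nat list \<Rightarrow> 'w \<Rightarrow> 'a mark"
  assumes M: "prob_space M"
    and attr_meas: "\<And>n i. attr n i \<in> borel_measurable M"
    and E_meas: "\<And>n j i. E n j i \<in> measurable M (count_space UNIV)"
    and p: "0 < p"
    and \<sigma>m_cont: "continuous_on UNIV \<sigma>m" and \<sigma>m_nonneg: "\<And>x. 0 \<le> \<sigma>m x"
    and \<phi>_meas: "\<phi> \<in> borel_measurable borel" and \<phi>_nonneg: "\<And>x. 0 \<le> \<phi> x"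
    and K: "0 \<le> K"
    and R4: "AE \<omega> in M. opnorm_p p n (\<lambda>i j. \<sigma>m (gmark E attr n i \<omega>) * \<phi> (gmark E attr n j \<omega>) * real (E n j i \<omega>)) \<le> ennreal K"
    and Xt_meas: "\<And>i. Xt n i [] \<in> borel_measurable M"
    and A: "0 \<le> A"
  defines "Sv \<equiv> (\<lambda>i. {\<omega>\<in>space M. F_event E attr n k \<epsilon> i (Xt n i) (\<theta> n i) \<omega>})"
  defines "Jr \<equiv> (\<lambda>i \<omega>. if Sv i \<in> sets M then indicator (space M - Sv i) \<omega> else 1 :: real)"
  defines "f \<equiv> (\<lambda>i \<omega>. \<sigma>m (gmark E attr n i \<omega>) * real (fst (gmark E attr n i \<omega>)))"
  defines "cp \<equiv> (2::real) powr p"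
  shows "AE \<omega> in M. (\<Sum>i\<in>{1..n}. nn_cond_exp M (Fn M attr n)
         (\<lambda>\<omega>. ennreal (((if F_event E attr n k \<epsilon> i (Xt n i) (\<theta> n i) \<omega> then 0 else 1)
             * \<sigma>m (gmark E attr n i \<omega>)
             * (\<Sum>j\<in>{1..n}. real (E n j i \<omega>) * \<phi> (gmark E attr n j \<omega>))) powr p)) \<omega>)
    \<le> (\<Sum>i\<in>{1..n}. ennreal (cp * real m powr p * A powr p) * nn_cond_exp M (Fn M attr n) (\<lambda>\<omega>. ennreal (Jr i \<omega>)) \<omega>
        + ennreal (cp * real m powr p) * nn_cond_exp M (Fn M attr n) (\<lambda>\<omega>. hA p A (f i \<omega>)) \<omega>
        + ennreal (cp * K powr p * (real m + 1)) * nn_cond_exp M (Fn M attr n) (\<lambda>\<omega>. ennreal (rho (gmark E attr n i \<omega>) (Xt n i [] \<omega>))) \<omega>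
        + ennreal (cp * K powr p) * nn_cond_exp M (Fn M attr n) (\<lambda>\<omega>. indicator (Stail \<phi> m) (Xt n i [] \<omega>)) \<omega>)"
proof -
  define F where "F = Fn M attr n"
  interpret finite_measure_subalgebra M F unfolding F_def by (rule fms_intro[OF M Fn_subalg[OF attr_meas]])
  define X where "X = (\<lambda>i \<omega>. gmark E attr n i \<omega>)"
  have Xm[measurable]: "X i \<in> borel_measurable M" for i unfolding X_def by (rule gmark_meas[OF attr_meas E_meas])
  have Em[measurable]: "(\<lambda>\<omega>. real (E n j i \<omega>)) \<in> borel_measurable M" for i j
    by (rule measurable_compose[OF E_meas borel_measurable_count_space])
  note [measurable] = Xt_meas \<phi>_meas borel_measurable_continuous_onI[OF \<sigma>m_cont]
  have fst_meas[measurable]: "(\<lambda>x::'a mark. real (fst x)) \<in> borel_measurable borel"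
    by (intro borel_measurable_continuous_onI continuous_intros)
  define L where "L = (\<lambda>i \<omega>. ennreal (((if F_event E attr n k \<epsilon> i (Xt n i) (\<theta> n i) \<omega> then 0 else 1)
             * \<sigma>m (X i \<omega>) * (\<Sum>j\<in>{1..n}. real (E n j i \<omega>) * \<phi> (X j \<omega>))) powr p))"
  define Cx where "Cx = (\<lambda>i \<omega>. \<Sum>j\<in>{1..n}. \<sigma>m (X i \<omega>) * \<phi> (X j \<omega>) * real (E n j i \<omega>) * indicator {x. real m < \<phi> x} (X j \<omega>))"
  define G where "G = (\<lambda>i \<omega>. ennreal (cp * real m powr p * A powr p) * ennreal (Jr i \<omega>)
       + ennreal (cp * real m powr p) * hA p A (f i \<omega>) + ennreal cp * ennreal (Cx i \<omega> powr p))"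
  define \<rho> where "\<rho> = (\<lambda>i \<omega>. rho (X i \<omega>) (Xt n i [] \<omega>))"
  define H where "H = (\<lambda>\<omega>. \<Sum>i\<in>{1..n}. ennreal (cp * real m powr p * A powr p) * ennreal (Jr i \<omega>)
        + ennreal (cp * real m powr p) * hA p A (f i \<omega>)
        + ennreal (cp * K powr p * (real m + 1)) * ennreal (\<rho> i \<omega>)
        + ennreal (cp * K powr p) * indicator (Stail \<phi> m) (Xt n i [] \<omega>))"
  have Jrm[measurable]: "(\<lambda>\<omega>. ennreal (Jr i \<omega>)) \<in> borel_measurable M" for i
  proof (cases "Sv i \<in> sets M")
    case True
    have "(indicator (space M - Sv i) :: _ \<Rightarrow> real) \<in> borel_measurable M"
      by (rule borel_measurable_indicator) (use True in auto)
    thus ?thesis unfolding Jr_def using True by simp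
  qed (simp add: Jr_def)
  have fm[measurable]: "f i \<in> borel_measurable M" for i unfolding f_def X_def[symmetric] by measurable
  have Cxm[measurable]: "Cx i \<in> borel_measurable M" for i unfolding Cx_def by measurable
  have \<rho>m[measurable]: "\<rho> i \<in> borel_measurable M" for i unfolding \<rho>_def by (intro rho_meas) auto
  have Gm[measurable]: "G i \<in> borel_measurable M" for i unfolding G_def by measurable
  have Sm[measurable]: "(\<lambda>\<omega>. indicator (Stail \<phi> m) (Xt n i [] \<omega>) :: ennreal) \<in> borel_measurable M" for i
    by (rule measurable_compose[OF Xt_meas borel_measurable_indicator[OF Stail_borel]])
  have \<rho>e[measurable]: "(\<lambda>\<omega>. ennreal (\<rho> i \<omega>)) \<in> borel_measurable M" for i by measurable
  have hAm[measurable]: "(\<lambda>\<omega>. hA p A (f i \<omega>)) \<in> borel_measurable M" for i by measurable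
  have Hm[measurable]: "H \<in> borel_measurable M" unfolding H_def by measurable
  have f0: "0 \<le> f i \<omega>" for i \<omega> unfolding f_def using \<sigma>m_nonneg by simp
  have Cx0: "0 \<le> Cx i \<omega>" for i \<omega> unfolding Cx_def using \<sigma>m_nonneg \<phi>_nonneg
    by (intro sum_nonneg) (auto simp: indicator_def)
  have LG: "L i \<omega> \<le> G i \<omega>" if \<omega>: "\<omega> \<in> space M" for i \<omega>
  proof -
    define J :: real where "J = (if F_event E attr n k \<epsilon> i (Xt n i) (\<theta> n i) \<omega> then 0 else 1)"
    define Y where "Y = \<sigma>m (X i \<omega>) * (\<Sum>j\<in>{1..n}. real (E n j i \<omega>) * \<phi> (X j \<omega>))"
    have JJ: "J \<le> Jr i \<omega>" "Jr i \<omega> = 0 \<or> Jr i \<omega> = 1" "0 \<le> J"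
      unfolding J_def Jr_def Sv_def using \<omega> by (auto simp: indicator_def)
    have Y0: "0 \<le> Y" unfolding Y_def using \<sigma>m_nonneg \<phi>_nonneg by (intro mult_nonneg_nonneg sum_nonneg) auto
    have "Y = (\<Sum>j\<in>{1..n}. \<sigma>m (X i \<omega>) * \<phi> (X j \<omega>) * real (E n j i \<omega>))"
      unfolding Y_def by (simp add: sum_distrib_left algebra_simps)
    also have "\<dots> \<le> (\<Sum>j\<in>{1..n}. real m * (\<sigma>m (X i \<omega>) * real (E n j i \<omega>))
         + \<sigma>m (X i \<omega>) * \<phi> (X j \<omega>) * real (E n j i \<omega>) * indicator {x. real m < \<phi> x} (X j \<omega>))"
    proof (rule sum_mono)
      fix j
      show "\<sigma>m (X i \<omega>) * \<phi> (X j \<omega>) * real (E n j i \<omega>) \<le> real m * (\<sigma>m (X i \<omega>) * real (E n j i \<omega>))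
         + \<sigma>m (X i \<omega>) * \<phi> (X j \<omega>) * real (E n j i \<omega>) * indicator {x. real m < \<phi> x} (X j \<omega>)"
      proof (cases "real m < \<phi> (X j \<omega>)")
        case True thus ?thesis using \<sigma>m_nonneg[of "X i \<omega>"] by (simp add: indicator_def)
      next
        case False
        hence "\<phi> (X j \<omega>) * (\<sigma>m (X i \<omega>) * real (E n j i \<omega>)) \<le> real m * (\<sigma>m (X i \<omega>) * real (E n j i \<omega>))"
          using \<sigma>m_nonneg[of "X i \<omega>"] by (intro mult_right_mono) auto
        thus ?thesis using False by (simp add: indicator_def algebra_simps)
      qed
    qed
    also have "\<dots> = real m * f i \<omega> + Cx i \<omega>"
    proof -
      have fst: "real (fst (X i \<omega>)) = (\<Sum>j\<in>{1..n}. real (E n j i \<omega>))"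
        unfolding X_def gmark_def indeg_def by simp
      have "(\<Sum>j\<in>{1..n}. real m * (\<sigma>m (X i \<omega>) * real (E n j i \<omega>))) = real m * f i \<omega>"
        unfolding f_def X_def[symmetric] fst by (simp add: sum_distrib_left)
      thus ?thesis unfolding Cx_def by (simp add: sum.distrib)
    qed
    finally have Yle: "Y \<le> real m * f i \<omega> + Cx i \<omega>" .
    have pw: "(J * Y) powr p \<le> cp * real m powr p * A powr p * Jr i \<omega>
        + cp * real m powr p * (f i \<omega> powr p * indicator {A<..} (f i \<omega>)) + cp * Cx i \<omega> powr p"
      unfolding cp_def using pw_main[OF p JJ(3,1,2) \<sigma>m_nonneg[of "X i \<omega>"] _ A Y0 Yle f0 Cx0] by simp
    have "L i \<omega> = ennreal ((J * Y) powr p)" unfolding L_def J_def Y_def by (simp add: mult.assoc)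
    also have "\<dots> \<le> ennreal (cp * real m powr p * A powr p * Jr i \<omega>
        + cp * real m powr p * (f i \<omega> powr p * indicator {A<..} (f i \<omega>)) + cp * Cx i \<omega> powr p)"
      using pw by (rule ennreal_leI)
    also have "\<dots> = ennreal (cp * real m powr p * A powr p) * ennreal (Jr i \<omega>)
       + ennreal (cp * real m powr p) * ennreal (f i \<omega> powr p * indicator {A<..} (f i \<omega>)) + ennreal cp * ennreal (Cx i \<omega> powr p)"
      using JJ unfolding cp_def
      by (auto simp: ennreal_plus[symmetric] ennreal_mult[symmetric] simp del: ennreal_plus ennreal_mult)
    also have "\<dots> \<le> G i \<omega>" unfolding G_def
      using hA_lower[OF p f0[of i \<omega>], where A=A] by (intro add_mono mult_left_mono order_refl) auto
    finally show ?thesis .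
  qed
  have s2: "AE \<omega> in M. \<forall>i\<in>{1..n}. nn_cond_exp M F (L i) \<omega> \<le> nn_cond_exp M F (G i) \<omega>"
  proof (subst AE_finite_all, simp, intro ballI)
    fix i
    show "AE \<omega> in M. nn_cond_exp M F (L i) \<omega> \<le> nn_cond_exp M F (G i) \<omega>"
    proof (cases "L i \<in> borel_measurable M")
      case True
      show ?thesis by (rule nn_cond_exp_mono) (use LG True in auto)
    next
      case False
      hence "nn_cond_exp M F (L i) = (\<lambda>_. 0)" unfolding nn_cond_exp_def by auto
      thus ?thesis by simp
    qed
  qed
  have s3: "AE \<omega> in M. nn_cond_exp M F (\<lambda>\<omega>. \<Sum>i\<in>{1..n}. G i \<omega>) \<omega> = (\<Sum>i\<in>{1..n}. nn_cond_exp M F (G i) \<omega>)"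
    by (rule ncs_sum) auto
  have GH: "(\<Sum>i\<in>{1..n}. G i \<omega>) \<le> H \<omega>"
    if \<omega>: "\<omega> \<in> space M" and op: "opnorm_p p n (\<lambda>i j. \<sigma>m (X i \<omega>) * \<phi> (X j \<omega>) * real (E n j i \<omega>)) \<le> ennreal K" for \<omega>
  proof -
    define T where "T = {j\<in>{1..n}. real m < \<phi> (X j \<omega>)}"
    have Cxe: "Cx i \<omega> = (\<Sum>j\<in>T. \<sigma>m (X i \<omega>) * \<phi> (X j \<omega>) * real (E n j i \<omega>))" for i
      unfolding Cx_def T_def by (rule sum.mono_neutral_cong_right) (auto simp: indicator_def)
    have opu: "(\<Sum>i\<in>{1..n}. Cx i \<omega> powr p) \<le> K powr p * real (card T)"
    proof -
      have Tsub: "T \<subseteq> {1..n}" unfolding T_def by auto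
      have Cn: "0 \<le> \<sigma>m (X i \<omega>) * \<phi> (X j \<omega>) * real (E n j i \<omega>)" for i j
        using \<sigma>m_nonneg \<phi>_nonneg by simp
      show ?thesis unfolding Cxe by (rule opnorm_use[OF p op K Tsub Cn])
    qed
    have cT: "real (card T) = (\<Sum>j\<in>{1..n}. indicator {x. real m < \<phi> x} (X j \<omega>))"
    proof -
      have "real (card T) = (\<Sum>j\<in>T. 1)" by simp
      also have "\<dots> = (\<Sum>j\<in>{1..n}. indicator {x. real m < \<phi> x} (X j \<omega>))"
        unfolding T_def by (rule sum.mono_neutral_cong_left) (auto simp: indicator_def)
      finally show ?thesis .
    qed
    have ind: "indicator {x. real m < \<phi> x} (X j \<omega>) \<le> (real m + 1) * \<rho> j \<omega> + indicator (Stail \<phi> m) (Xt n j [] \<omega>)" for j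
    proof (cases "real m < \<phi> (X j \<omega>)")
      case True
      show ?thesis
      proof (cases "\<rho> j \<omega> < 1 / (real m + 1)")
        case True
        hence "Xt n j [] \<omega> \<in> Stail \<phi> m" unfolding Stail_def \<rho>_def using \<open>real m < \<phi> (X j \<omega>)\<close> by blast
        thus ?thesis using rho_nonneg[of "X j \<omega>" "Xt n j [] \<omega>"] unfolding \<rho>_def by (simp add: indicator_def)
      next
        case False
        hence "1 \<le> (real m + 1) * \<rho> j \<omega>" by (simp add: field_simps)
        thus ?thesis by (simp add: indicator_def)
      qed
    next
      case False thus ?thesis using rho_nonneg[of "X j \<omega>" "Xt n j [] \<omega>"] unfolding \<rho>_def by (simp add: indicator_def)
    qed
    have \<rho>0: "0 \<le> \<rho> j \<omega>" for j unfolding \<rho>_def by (rule rho_nonneg)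
    have "(\<Sum>i\<in>{1..n}. Cx i \<omega> powr p) \<le> K powr p * (\<Sum>j\<in>{1..n}. (real m + 1) * \<rho> j \<omega> + indicator (Stail \<phi> m) (Xt n j [] \<omega>))"
      using opu unfolding cT by (smt (verit) ind mult_left_mono powr_ge_zero sum_mono)
    hence "ennreal (cp * (\<Sum>i\<in>{1..n}. Cx i \<omega> powr p)) \<le> ennreal (cp * (K powr p * (\<Sum>j\<in>{1..n}. (real m + 1) * \<rho> j \<omega> + indicator (Stail \<phi> m) (Xt n j [] \<omega>))))"
      unfolding cp_def by (intro ennreal_leI mult_left_mono) auto
    also have "\<dots> = ennreal (\<Sum>j\<in>{1..n}. (cp * K powr p * (real m + 1)) * \<rho> j \<omega> + (cp * K powr p) * indicator (Stail \<phi> m) (Xt n j [] \<omega>))"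
    proof (rule arg_cong[where f=ennreal])
      show "cp * (K powr p * (\<Sum>j\<in>{1..n}. (real m + 1) * \<rho> j \<omega> + indicator (Stail \<phi> m) (Xt n j [] \<omega>)))
        = (\<Sum>j\<in>{1..n}. (cp * K powr p * (real m + 1)) * \<rho> j \<omega> + (cp * K powr p) * indicator (Stail \<phi> m) (Xt n j [] \<omega>))"
        unfolding sum_distrib_left by (rule sum.cong[OF refl]) (simp add: algebra_simps)
    qed
    also have "\<dots> = (\<Sum>j\<in>{1..n}. ennreal ((cp * K powr p * (real m + 1)) * \<rho> j \<omega> + (cp * K powr p) * indicator (Stail \<phi> m) (Xt n j [] \<omega>)))"
      using \<rho>0 unfolding cp_def by (intro sum_ennreal[symmetric]) auto
    also have "\<dots> = (\<Sum>j\<in>{1..n}. ennreal (cp * K powr p * (real m + 1)) * ennreal (\<rho> j \<omega>) + ennreal (cp * K powr p) * indicator (Stail \<phi> m) (Xt n j [] \<omega>))"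
    proof (rule sum.cong[OF refl])
      fix j
      show "ennreal ((cp * K powr p * (real m + 1)) * \<rho> j \<omega> + (cp * K powr p) * indicator (Stail \<phi> m) (Xt n j [] \<omega>))
        = ennreal (cp * K powr p * (real m + 1)) * ennreal (\<rho> j \<omega>) + ennreal (cp * K powr p) * indicator (Stail \<phi> m) (Xt n j [] \<omega>)"
      proof -
        have a: "0 \<le> cp * K powr p * (real m + 1)" "0 \<le> cp * K powr p" unfolding cp_def by auto
        have "ennreal ((cp * K powr p * (real m + 1)) * \<rho> j \<omega> + (cp * K powr p) * indicator (Stail \<phi> m) (Xt n j [] \<omega>))
          = ennreal ((cp * K powr p * (real m + 1)) * \<rho> j \<omega>) + ennreal ((cp * K powr p) * indicator (Stail \<phi> m) (Xt n j [] \<omega>))"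
          using a \<rho>0[of j] by (intro ennreal_plus) auto
        also have "ennreal ((cp * K powr p * (real m + 1)) * \<rho> j \<omega>) = ennreal (cp * K powr p * (real m + 1)) * ennreal (\<rho> j \<omega>)"
          using a \<rho>0[of j] by (intro ennreal_mult) auto
        also have "ennreal ((cp * K powr p) * indicator (Stail \<phi> m) (Xt n j [] \<omega>)) = ennreal (cp * K powr p) * ennreal (indicator (Stail \<phi> m) (Xt n j [] \<omega>))"
          using a by (intro ennreal_mult) auto
        finally show ?thesis by (simp only: ennreal_indicator)
      qed
    qed
    finally have C1: "ennreal (cp * (\<Sum>i\<in>{1..n}. Cx i \<omega> powr p)) \<le> \<dots>" .
    have "(\<Sum>i\<in>{1..n}. G i \<omega>) = (\<Sum>i\<in>{1..n}. ennreal (cp * real m powr p * A powr p) * ennreal (Jr i \<omega>)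
       + ennreal (cp * real m powr p) * hA p A (f i \<omega>)) + ennreal (cp * (\<Sum>i\<in>{1..n}. Cx i \<omega> powr p))"
      unfolding G_def cp_def
      by (simp add: sum.distrib sum_distrib_left ennreal_mult[symmetric] del: ennreal_mult)
    also have "\<dots> \<le> (\<Sum>i\<in>{1..n}. ennreal (cp * real m powr p * A powr p) * ennreal (Jr i \<omega>)
       + ennreal (cp * real m powr p) * hA p A (f i \<omega>)) + (\<Sum>j\<in>{1..n}. ennreal (cp * K powr p * (real m + 1)) * ennreal (\<rho> j \<omega>) + ennreal (cp * K powr p) * indicator (Stail \<phi> m) (Xt n j [] \<omega>))"
      using C1 by (rule add_left_mono)
    also have "\<dots> = H \<omega>" unfolding H_def by (simp add: sum.distrib add.assoc)
    finally show ?thesis .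
  qed
  have s4: "AE \<omega> in M. (\<Sum>i\<in>{1..n}. G i \<omega>) \<le> H \<omega>"
  proof -
    have "AE \<omega> in M. \<omega> \<in> space M" by simp
    from R4 this show ?thesis by eventually_elim (rule GH, auto simp: X_def)
  qed
  have s5: "AE \<omega> in M. nn_cond_exp M F (\<lambda>\<omega>. \<Sum>i\<in>{1..n}. G i \<omega>) \<omega> \<le> nn_cond_exp M F H \<omega>"
    by (rule nn_cond_exp_mono[OF s4]) auto
  have s6a: "AE \<omega> in M. nn_cond_exp M F H \<omega> = (\<Sum>i\<in>{1..n}. nn_cond_exp M F (\<lambda>\<omega>. ennreal (cp * real m powr p * A powr p) * ennreal (Jr i \<omega>)
        + ennreal (cp * real m powr p) * hA p A (f i \<omega>)
        + ennreal (cp * K powr p * (real m + 1)) * ennreal (\<rho> i \<omega>)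
        + ennreal (cp * K powr p) * indicator (Stail \<phi> m) (Xt n i [] \<omega>)) \<omega>)"
    unfolding H_def by (intro ncs_sum) measurable
  have s6b: "AE \<omega> in M. \<forall>i\<in>{1..n}. nn_cond_exp M F (\<lambda>\<omega>. ennreal (cp * real m powr p * A powr p) * ennreal (Jr i \<omega>)
        + ennreal (cp * real m powr p) * hA p A (f i \<omega>)
        + ennreal (cp * K powr p * (real m + 1)) * ennreal (\<rho> i \<omega>)
        + ennreal (cp * K powr p) * indicator (Stail \<phi> m) (Xt n i [] \<omega>)) \<omega>
     = ennreal (cp * real m powr p * A powr p) * nn_cond_exp M F (\<lambda>\<omega>. ennreal (Jr i \<omega>)) \<omega>
        + ennreal (cp * real m powr p) * nn_cond_exp M F (\<lambda>\<omega>. hA p A (f i \<omega>)) \<omega>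
        + ennreal (cp * K powr p * (real m + 1)) * nn_cond_exp M F (\<lambda>\<omega>. ennreal (\<rho> i \<omega>)) \<omega>
        + ennreal (cp * K powr p) * nn_cond_exp M F (\<lambda>\<omega>. indicator (Stail \<phi> m) (Xt n i [] \<omega>)) \<omega>"
    by (subst AE_finite_all, simp, intro ballI ncs_lin4) (rule Jrm hAm \<rho>e Sm)+
  from s2 s3 s5 s6a s6b show ?thesis
  proof eventually_elim
    case (elim \<omega>)
    have "(\<Sum>i\<in>{1..n}. nn_cond_exp M F (L i) \<omega>) \<le> (\<Sum>i\<in>{1..n}. nn_cond_exp M F (G i) \<omega>)"
      using elim(1) by (intro sum_mono) auto
    also have "\<dots> \<le> nn_cond_exp M F H \<omega>" using elim(2,3) by simp
    also have "\<dots> = (\<Sum>i\<in>{1..n}. ennreal (cp * real m powr p * A powr p) * nn_cond_exp M F (\<lambda>\<omega>. ennreal (Jr i \<omega>)) \<omega>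
        + ennreal (cp * real m powr p) * nn_cond_exp M F (\<lambda>\<omega>. hA p A (f i \<omega>)) \<omega>
        + ennreal (cp * K powr p * (real m + 1)) * nn_cond_exp M F (\<lambda>\<omega>. ennreal (\<rho> i \<omega>)) \<omega>
        + ennreal (cp * K powr p) * nn_cond_exp M F (\<lambda>\<omega>. indicator (Stail \<phi> m) (Xt n i [] \<omega>)) \<omega>)"
      using elim(4,5) by (auto intro: sum.cong)
    finally show ?case unfolding L_def F_def \<rho>_def X_def .
  qed
qed



lemma op_AE_le:
  assumes "finite_measure M" "AE \<omega> in M. P \<omega> \<longrightarrow> Q \<omega>"
  shows "outer_prob M {\<omega>\<in>space M. P \<omega>} \<le> outer_prob M {\<omega>\<in>space M. Q \<omega>}"
  by (rule op_AE_union[OF assms(1)]) (use assms(2) in auto)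

lemma conv_enn0_unroot:
  assumes p: "0 < p" and c: "conv_prob_enn0 M (\<lambda>n \<omega>. enn_root p (X n \<omega>))"
  shows "conv_prob_enn0 M X"
  unfolding conv_prob_enn0_def
proof (intro allI impI)
  fix \<delta> :: real assume d: "0 < \<delta>"
  define d' where "d' = \<delta> powr (1/p)"
  have d'0: "0 < d'" unfolding d'_def using d by simp
  have eq: "d' powr p = \<delta>" unfolding d'_def using d p by (simp add: powr_powr)
  have "((\<lambda>n. outer_prob M {\<omega> \<in> space M. ennreal d' < enn_root p (X n \<omega>)}) \<longlongrightarrow> 0) sequentially"
    using c d'0 unfolding conv_prob_enn0_def by auto
  thus "((\<lambda>n. outer_prob M {\<omega> \<in> space M. ennreal \<delta> < X n \<omega>}) \<longlongrightarrow> 0) sequentially"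
    by (simp add: enn_root_less_iff[OF p d'0] eq)
qed

lemma split4:
  fixes x1 x2 x3 x4 :: ennreal
  assumes "0 < \<delta>" "ennreal \<delta> < x1 + x2 + x3 + x4"
  shows "ennreal (\<delta>/4) < x1 \<or> ennreal (\<delta>/4) < x2 \<or> ennreal (\<delta>/4) < x3 \<or> ennreal (\<delta>/4) < x4"
proof (rule ccontr)
  assume "\<not> ?thesis"
  hence "x1 + x2 + x3 + x4 \<le> ennreal (\<delta>/4) + ennreal (\<delta>/4) + ennreal (\<delta>/4) + ennreal (\<delta>/4)"
    by (intro add_mono) auto
  also have "\<dots> = ennreal \<delta>" using assms by (simp flip: ennreal_plus)
  finally show False using assms by simp
qed

lemma a_term:
  fixes M :: "'w measure" and attr :: "nat \<Rightarrow> nat \<Rightarrow> 'w \<Rightarrow> 'a::{metric_space, second_countable_topology}"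
    and P :: "nat \<Rightarrow> 'w \<Rightarrow> bool"
  assumes M: "prob_space M" and attr_meas: "\<And>n i. attr n i \<in> borel_measurable M" and n: "1 \<le> n"
  defines "Sv \<equiv> (\<lambda>i. {\<omega>\<in>space M. P i \<omega>})"
  defines "Jr \<equiv> (\<lambda>i \<omega>. if Sv i \<in> sets M then indicator (space M - Sv i) \<omega> else 1 :: real)"
  shows "AE \<omega> in M. ennreal (1 / real n) * (\<Sum>i\<in>{1..n}. nn_cond_exp M (Fn M attr n) (\<lambda>\<omega>. ennreal (Jr i \<omega>)) \<omega>)
     = ennreal (\<bar>(1 / real n) * (\<Sum>i\<in>{1..n}. real_cond_exp M (Fn M attr n) (indicator (Sv i)) \<omega>) - 1\<bar>)"
proof -
  have "AE \<omega> in M. \<forall>i\<in>{1..n}. nn_cond_exp M (Fn M attr n) (\<lambda>\<omega>. ennreal (Jr i \<omega>)) \<omega>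
      = ennreal (1 - real_cond_exp M (Fn M attr n) (indicator (Sv i)) \<omega>)
     \<and> real_cond_exp M (Fn M attr n) (indicator (Sv i)) \<omega> \<le> 1 \<and> 0 \<le> real_cond_exp M (Fn M attr n) (indicator (Sv i)) \<omega>"
    unfolding Jr_def Sv_def
    by (subst AE_finite_all, simp, intro ballI Jr_cond[OF M Fn_subalg[OF attr_meas]]) auto
  thus ?thesis
  proof eventually_elim
    case (elim \<omega>)
    define r where "r = (\<lambda>i. real_cond_exp M (Fn M attr n) (indicator (Sv i)) \<omega>)"
    have r: "\<forall>i\<in>{1..n}. 0 \<le> r i \<and> r i \<le> 1" using elim unfolding r_def by auto
    have "(\<Sum>i\<in>{1..n}. nn_cond_exp M (Fn M attr n) (\<lambda>\<omega>. ennreal (Jr i \<omega>)) \<omega>) = (\<Sum>i\<in>{1..n}. ennreal (1 - r i))"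
      using elim unfolding r_def by (intro sum.cong) auto
    also have "\<dots> = ennreal (\<Sum>i\<in>{1..n}. (1 - r i))" using r by (intro sum_ennreal) auto
    finally have e0: "(\<Sum>i\<in>{1..n}. nn_cond_exp M (Fn M attr n) (\<lambda>\<omega>. ennreal (Jr i \<omega>)) \<omega>) = ennreal (\<Sum>i\<in>{1..n}. (1 - r i))" .
    have nn: "0 \<le> (\<Sum>i\<in>{1..n}. (1 - r i))" using r by (intro sum_nonneg) auto
    have e: "ennreal (1 / real n) * (\<Sum>i\<in>{1..n}. nn_cond_exp M (Fn M attr n) (\<lambda>\<omega>. ennreal (Jr i \<omega>)) \<omega>)
       = ennreal (1 / real n * (\<Sum>i\<in>{1..n}. (1 - r i)))"
      unfolding e0 using nn by (subst ennreal_mult) auto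
    have s: "(\<Sum>i\<in>{1..n}. (1 - r i)) = real n - (\<Sum>i\<in>{1..n}. r i)" by (simp add: sum_subtractf)
    have le: "(\<Sum>i\<in>{1..n}. r i) \<le> real n" using sum_mono[of "{1..n}" r "\<lambda>_. 1"] r by auto
    have "1 / real n * (\<Sum>i\<in>{1..n}. (1 - r i)) = \<bar>(1 / real n) * (\<Sum>i\<in>{1..n}. r i) - 1\<bar>"
      using n le unfolding s by (simp add: field_simps abs_if)
    thus ?case using e unfolding r_def by simp
  qed
qed

lemma d_term:
  fixes M :: "'w measure" and attr :: "nat \<Rightarrow> nat \<Rightarrow> 'w \<Rightarrow> 'a::{metric_space, second_countable_topology}"
    and Xt :: "nat \<Rightarrow> nat \<Rightarrow> nat list \<Rightarrow> 'w \<Rightarrow> 'b::topological_space"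
  assumes M: "prob_space M" and attr_meas: "\<And>n i. attr n i \<in> borel_measurable M" and n: "1 \<le> n"
    and Xt_meas: "\<And>i. Xt n i [] \<in> borel_measurable M" and law: "\<And>i. distr M borel (Xt n i []) = \<mu>r"
    and S: "S \<in> sets borel"
  shows "(\<integral>\<^sup>+ \<omega>. ennreal (1 / real n) * (\<Sum>i\<in>{1..n}. nn_cond_exp M (Fn M attr n) (\<lambda>\<omega>. indicator S (Xt n i [] \<omega>)) \<omega>) \<partial>M)
     = emeasure \<mu>r S"
proof -
  interpret finite_measure_subalgebra M "Fn M attr n" by (rule fms_intro[OF M Fn_subalg[OF attr_meas]])
  have im: "(\<lambda>\<omega>. indicator S (Xt n i [] \<omega>) :: ennreal) \<in> borel_measurable M" for i
    by (rule measurable_compose[OF Xt_meas borel_measurable_indicator[OF S]])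
  have eqi: "(\<integral>\<^sup>+ \<omega>. indicator S (Xt n i [] \<omega>) \<partial>M) = emeasure \<mu>r S" for i
  proof -
    have "(\<integral>\<^sup>+ \<omega>. indicator S (Xt n i [] \<omega>) \<partial>M) = (\<integral>\<^sup>+ x. indicator S x \<partial>distr M borel (Xt n i []))"
      using Xt_meas S by (subst nn_integral_distr) auto
    also have "\<dots> = emeasure (distr M borel (Xt n i [])) S" using S by simp
    finally show ?thesis using law by simp
  qed
  have "(\<integral>\<^sup>+ \<omega>. ennreal (1 / real n) * (\<Sum>i\<in>{1..n}. nn_cond_exp M (Fn M attr n) (\<lambda>\<omega>. indicator S (Xt n i [] \<omega>)) \<omega>) \<partial>M)
     = ennreal (1 / real n) * (\<Sum>i\<in>{1..n}. \<integral>\<^sup>+ \<omega>. nn_cond_exp M (Fn M attr n) (\<lambda>\<omega>. indicator S (Xt n i [] \<omega>)) \<omega> \<partial>M)"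
    by (subst nn_integral_cmult) (auto simp: nn_integral_sum)
  also have "\<dots> = ennreal (1 / real n) * (\<Sum>i\<in>{1..n}. \<integral>\<^sup>+ \<omega>. indicator S (Xt n i [] \<omega>) \<partial>M)"
    using im by (simp add: ncs_integral)
  also have "\<dots> = ennreal (1 / real n) * (\<Sum>i\<in>{1..n}. emeasure \<mu>r S)"
    using eqi by simp
  also have "ennreal (1 / real n) * (\<Sum>i\<in>{1..n}. emeasure \<mu>r S) = emeasure \<mu>r S"
    using n by (simp add: ennreal_of_nat_eq_real_of_nat ennreal_mult[symmetric] mult.assoc[symmetric] del: ennreal_mult)
  finally show ?thesis .
qed

lemma b_term:
  assumes M: "prob_space M" and sub: "subalgebra M F" and cl: "cond_law_mix M F n Y \<kappa>"
    and Ym: "\<And>i. Y i \<in> borel_measurable M" and p: "0 < p" and A: "2 \<le> A"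
  shows "AE \<omega> in M. ennreal (1 / real n) * (\<Sum>i\<in>{1..n}. nn_cond_exp M F (\<lambda>\<omega>. hA p A (Y i \<omega>)) \<omega>)
     \<le> ennreal (2 powr p * (1 + 2 powr p)) * (INF \<pi>\<in>couplings (\<kappa> \<omega>) L. \<integral>\<^sup>+ z. ennreal (\<bar>fst z - snd z\<bar> powr p) \<partial>\<pi>)
       + ennreal (2 powr p) * tailL p L A"
  using b_link[OF M sub cl Ym, of p A]
proof eventually_elim
  case (elim \<omega>)
  show ?case unfolding elim
    by (rule le_INF_aff) (auto intro: coupling_bound[OF p A] simp: add_pos_pos)
qed



lemma ennreal_add_lt_aux:
  fixes x y :: ennreal
  assumes "x \<le> ennreal a" "y < ennreal b" "0 \<le> a"
  shows "x + y < ennreal (a + b)"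
proof -
  have "x + y \<le> ennreal a + y" using assms by (intro add_right_mono)
  also have "\<dots> < ennreal a + ennreal b" using assms by (simp add: ennreal_add_left_cancel_less)
  also have "\<dots> \<le> ennreal (a + b)"
    using assms by (cases "0 \<le> b") (auto simp: ennreal_plus ennreal_neg)
  finally show ?thesis .
qed

lemma main_generic:
  fixes M :: "'w measure"
    and attr :: "nat \<Rightarrow> nat \<Rightarrow> 'w \<Rightarrow> 'a::{metric_space, second_countable_topology}"
    and E :: "nat \<Rightarrow> nat \<Rightarrow> nat \<Rightarrow> 'w \<Rightarrow> nat"
    and \<phi> \<sigma>m :: "'a mark \<Rightarrow> real" and k :: nat and \<epsilon> :: real
    and \<theta> :: "nat \<Rightarrow> nat \<Rightarrow> nat list \<Rightarrow> 'w \<Rightarrow> nat" and Xt :: "nat \<Rightarrow> nat \<Rightarrow> nat list \<Rightarrow> 'w \<Rightarrow> 'a mark"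
    and \<mu>r :: "'a mark measure" and K p :: real
  assumes M: "prob_space M"
    and attr_meas: "\<And>n i. attr n i \<in> borel_measurable M"
    and E_meas: "\<And>n j i. E n j i \<in> measurable M (count_space UNIV)"
    and p1: "1 \<le> p"
    and \<sigma>m_cont: "continuous_on UNIV \<sigma>m" and \<sigma>m_nonneg: "\<And>x. 0 \<le> \<sigma>m x"
    and \<phi>_meas: "\<phi> \<in> borel_measurable borel" and \<phi>_nonneg: "\<And>x. 0 \<le> \<phi> x"
    and loc: "\<And>y. \<exists>r>0. \<exists>B. \<forall>x. rho x y < r \<longrightarrow> \<phi> x \<le> B"
    and K: "0 \<le> K"
    and R4: "AE \<omega> in M. \<forall>n. opnorm_p p n (\<lambda>i j. \<sigma>m (gmark E attr n i \<omega>) * \<phi> (gmark E attr n j \<omega>) * real (E n j i \<omega>)) \<le> ennreal K"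
    and Xt_meas: "\<And>n i. Xt n i [] \<in> borel_measurable M"
    and root_law: "\<And>n i. distr M borel (Xt n i []) = \<mu>r"
    and SC2: "conv_prob_enn0 M (\<lambda>n \<omega>. ennreal (1 / real n) * (\<Sum>i\<in>{1..n}.
               nn_cond_exp M (Fn M attr n)
                 (\<lambda>\<omega>. ennreal (rho (gmark E attr n i \<omega>) (Xt n i [] \<omega>))) \<omega>))"
    and SC3k: "conv_prob M (\<lambda>n \<omega>. (1 / real n) * (\<Sum>i\<in>{1..n}.
               real_cond_exp M (Fn M attr n)
                 (indicator {\<omega>\<in>space M. F_event E attr n k \<epsilon> i (Xt n i) (\<theta> n i) \<omega>}) \<omega>)) 1"
    and G1: "(\<integral>\<^sup>+ x. ennreal ((real (fst x) * \<sigma>m x) powr p) \<partial>\<mu>r) < \<infinity>"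
    and G3: "dp_conv M (Fn M attr) p (\<lambda>n i \<omega>. \<sigma>m (gmark E attr n i \<omega>) * real (fst (gmark E attr n i \<omega>)))
               (distr \<mu>r borel (\<lambda>x. \<sigma>m x * real (fst x)))"
  shows "conv_prob_enn0 M (\<lambda>n \<omega>. enn_root p (ennreal (1 / real n) * (\<Sum>i\<in>{1..n}. nn_cond_exp M (Fn M attr n)
         (\<lambda>\<omega>. ennreal (((if F_event E attr n k \<epsilon> i (Xt n i) (\<theta> n i) \<omega> then 0 else 1)
             * \<sigma>m (gmark E attr n i \<omega>)
             * (\<Sum>j\<in>{1..n}. real (E n j i \<omega>) * \<phi> (gmark E attr n j \<omega>))) powr p)) \<omega>)))"
proof -
  have p: "0 < p" using p1 by simp
  have finM: "finite_measure M" using M by (simp add: prob_space_def)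
  define cp where "cp = (2::real) powr p"
  have cp0: "0 < cp" unfolding cp_def by simp
  define L where "L = distr \<mu>r borel (\<lambda>x. \<sigma>m x * real (fst x))"
  define f where "f = (\<lambda>n i \<omega>. \<sigma>m (gmark E attr n i \<omega>) * real (fst (gmark E attr n i \<omega>)))"
  have \<mu>r_prob: "prob_space \<mu>r" using root_law[of 0 0] prob_space.prob_space_distr[OF M Xt_meas[of 0 0]] by simp
  have s\<mu>r: "sets \<mu>r = sets borel" using root_law[of 0 0] by (metis sets_distr)
  obtain \<kappa> where \<kappa>: "\<And>n. 1 \<le> n \<Longrightarrow> cond_law_mix M (Fn M attr n) n (f n) (\<kappa> n)"
    and W: "conv_prob_enn0 M (\<lambda>n \<omega>. wasserstein p (\<kappa> n \<omega>) L)"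
    using G3 unfolding dp_conv_def f_def L_def by blast
  define INFc where "INFc = (\<lambda>n \<omega>. INF \<pi>\<in>couplings (\<kappa> n \<omega>) L. \<integral>\<^sup>+ z. ennreal (\<bar>fst z - snd z\<bar> powr p) \<partial>\<pi>)"
  have Wc: "conv_prob_enn0 M INFc"
    using conv_enn0_unroot[OF p, of M INFc] W unfolding wasserstein_def INFc_def by simp
  have Xm: "gmark E attr n i \<in> borel_measurable M" for n i by (rule gmark_meas[OF attr_meas E_meas])
  have fm: "f n i \<in> borel_measurable M" for n i
  proof -
    have "(\<lambda>x::'a mark. \<sigma>m x * real (fst x)) \<in> borel_measurable borel"
      by (intro borel_measurable_continuous_onI continuous_intros \<sigma>m_cont)
    from measurable_compose[OF Xm this] show ?thesis unfolding f_def .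
  qed
  have fstarm: "(\<lambda>x::'a mark. \<sigma>m x * real (fst x)) \<in> borel_measurable \<mu>r"
    unfolding measurable_cong_sets[OF s\<mu>r refl]
    by (intro borel_measurable_continuous_onI continuous_intros \<sigma>m_cont)
  have sL: "sets L = sets borel" unfolding L_def by simp
  have finL: "(\<integral>\<^sup>+ y. ennreal ((\<bar>y\<bar> + 1) powr p) \<partial>L) < \<infinity>"
  proof -
    have "(\<integral>\<^sup>+ y. ennreal ((\<bar>y\<bar> + 1) powr p) \<partial>L) = (\<integral>\<^sup>+ x. ennreal ((\<bar>\<sigma>m x * real (fst x)\<bar> + 1) powr p) \<partial>\<mu>r)"
      unfolding L_def by (rule nn_integral_distr[OF fstarm]) measurable
    also have "\<dots> \<le> (\<integral>\<^sup>+ x. ennreal cp * (ennreal ((real (fst x) * \<sigma>m x) powr p) + 1) \<partial>\<mu>r)"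
    proof (rule nn_integral_mono)
      fix x :: "'a mark"
      have a0: "0 \<le> \<sigma>m x * real (fst x)" using \<sigma>m_nonneg[of x] by simp
      have "(\<bar>\<sigma>m x * real (fst x)\<bar> + 1) powr p \<le> cp * ((\<sigma>m x * real (fst x)) powr p + 1 powr p)"
        unfolding cp_def using pow_split[OF p a0, of 1] a0 by simp
      hence "ennreal ((\<bar>\<sigma>m x * real (fst x)\<bar> + 1) powr p) \<le> ennreal (cp * ((real (fst x) * \<sigma>m x) powr p + 1))"
        by (intro ennreal_leI) (simp add: mult.commute)
      also have "\<dots> = ennreal cp * (ennreal ((real (fst x) * \<sigma>m x) powr p) + 1)"
        using cp0 by (simp add: ennreal_mult ennreal_plus)
      finally show "ennreal ((\<bar>\<sigma>m x * real (fst x)\<bar> + 1) powr p) \<le> ennreal cp * (ennreal ((real (fst x) * \<sigma>m x) powr p) + 1)" .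
    qed
    also have "\<dots> = ennreal cp * ((\<integral>\<^sup>+ x. ennreal ((real (fst x) * \<sigma>m x) powr p) \<partial>\<mu>r) + emeasure \<mu>r (space \<mu>r))"
    proof -
      have m1: "(\<lambda>x::'a mark. ennreal ((real (fst x) * \<sigma>m x) powr p)) \<in> borel_measurable \<mu>r"
        using fstarm by (simp add: mult.commute)
      show ?thesis using m1 by (subst nn_integral_cmult) (auto simp: nn_integral_add)
    qed
    also have "\<dots> < \<infinity>" using G1 prob_space.emeasure_space_1[OF \<mu>r_prob]
      by (simp add: ennreal_mult_less_top)
    finally show ?thesis .
  qed
  have tL: "(\<lambda>a::nat. tailL p L (real a)) \<longlonglongrightarrow> 0" by (rule tailL_lim[OF p sL finL])
  define Z where "Z = (\<lambda>n \<omega>. ennreal (1 / real n) * (\<Sum>i\<in>{1..n}. nn_cond_exp M (Fn M attr n)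
         (\<lambda>\<omega>. ennreal (((if F_event E attr n k \<epsilon> i (Xt n i) (\<theta> n i) \<omega> then 0 else 1)
             * \<sigma>m (gmark E attr n i \<omega>)
             * (\<Sum>j\<in>{1..n}. real (E n j i \<omega>) * \<phi> (gmark E attr n j \<omega>))) powr p)) \<omega>))"
  define Sv where "Sv = (\<lambda>n i. {\<omega>\<in>space M. F_event E attr n k \<epsilon> i (Xt n i) (\<theta> n i) \<omega>})"
  define Jr where "Jr = (\<lambda>n i \<omega>. if Sv n i \<in> sets M then indicator (space M - Sv n i) \<omega> else 1 :: real)"
  define U where "U = (\<lambda>n \<omega>. (1 / real n) * (\<Sum>i\<in>{1..n}. real_cond_exp M (Fn M attr n) (indicator (Sv n i)) \<omega>))"
  define sn where "sn = (\<lambda>n \<omega>. ennreal (1 / real n) * (\<Sum>i\<in>{1..n}.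
               nn_cond_exp M (Fn M attr n) (\<lambda>\<omega>. ennreal (rho (gmark E attr n i \<omega>) (Xt n i [] \<omega>))) \<omega>))"
  have Zc: "conv_prob_enn0 M Z"
  proof (rule conv_enn0_I)
    fix \<delta> \<eta> :: real assume \<delta>: "0 < \<delta>" and \<eta>: "0 < \<eta>"
    define \<delta>1 where "\<delta>1 = \<delta> / 4"
    define \<eta>1 where "\<eta>1 = \<eta> / 4"
    have \<delta>1: "0 < \<delta>1" and \<eta>1: "0 < \<eta>1" unfolding \<delta>1_def \<eta>1_def using \<delta> \<eta> by auto
    define \<gamma>' where "\<gamma>' = cp * K powr p"
    have \<gamma>'0: "0 \<le> \<gamma>'" unfolding \<gamma>'_def using cp0 by simp
    have "(\<lambda>m. emeasure \<mu>r (Stail \<phi> m)) \<longlonglongrightarrow> 0"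
      by (rule Stail_lim[OF _ s\<mu>r loc]) (use \<mu>r_prob in \<open>simp add: prob_space_def\<close>)
    hence "(\<lambda>m. ennreal (1/\<delta>1) * (ennreal \<gamma>' * emeasure \<mu>r (Stail \<phi> m))) \<longlonglongrightarrow> ennreal (1/\<delta>1) * (ennreal \<gamma>' * 0)"
      by (intro ennreal_tendsto_cmult) auto
    hence "\<forall>\<^sub>F m in sequentially. ennreal (1/\<delta>1) * (ennreal \<gamma>' * emeasure \<mu>r (Stail \<phi> m)) < ennreal \<eta>1"
      using \<eta>1 by (intro order_tendstoD(2)) auto
    then obtain m :: nat where m: "ennreal (1/\<delta>1) * (ennreal \<gamma>' * emeasure \<mu>r (Stail \<phi> m)) \<le> ennreal \<eta>1"
      unfolding eventually_sequentially by (auto intro: less_imp_le)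
    define \<beta> where "\<beta> = cp * real m powr p"
    have \<beta>0: "0 \<le> \<beta>" unfolding \<beta>_def using cp0 by simp
    define \<gamma> where "\<gamma> = cp * K powr p * (real m + 1)"
    have \<gamma>0: "0 \<le> \<gamma>" unfolding \<gamma>_def using cp0 by simp
    have "(\<lambda>a. ennreal \<beta> * (ennreal cp * tailL p L (real a))) \<longlonglongrightarrow> ennreal \<beta> * (ennreal cp * 0)"
      by (intro ennreal_tendsto_cmult tL) auto
    hence "\<forall>\<^sub>F a in sequentially. ennreal \<beta> * (ennreal cp * tailL p L (real a)) < ennreal (\<delta>1/2)"
      using \<delta>1 by (intro order_tendstoD(2)) auto
    then obtain a0 where a0: "\<And>a. a \<ge> a0 \<Longrightarrow> ennreal \<beta> * (ennreal cp * tailL p L (real a)) < ennreal (\<delta>1/2)"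
      unfolding eventually_sequentially by auto
    define A where "A = real (max a0 2)"
    have A2: "2 \<le> A" unfolding A_def by simp
    have At: "ennreal \<beta> * (ennreal cp * tailL p L A) < ennreal (\<delta>1/2)" unfolding A_def by (rule a0) simp
    define \<alpha> where "\<alpha> = cp * real m powr p * A powr p"
    have \<alpha>0: "0 \<le> \<alpha>" unfolding \<alpha>_def using cp0 by simp
    obtain N1 where N1: "\<forall>n\<ge>N1. outer_prob M {\<omega> \<in> space M. \<delta>1 / (\<alpha> + 1) < \<bar>U n \<omega> - 1\<bar>} \<le> ennreal \<eta>1"
      using conv_prob_D[OF SC3k, of "\<delta>1 / (\<alpha> + 1)" \<eta>1] \<delta>1 \<eta>1 \<alpha>0 unfolding U_def Sv_def by auto
    have "conv_prob_enn0 M (\<lambda>n \<omega>. ennreal (\<beta> * (cp * (1 + cp))) * INFc n \<omega>)"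
      by (rule conv_enn0_cmult[OF Wc]) (use \<beta>0 cp0 in simp)
    then obtain N2 where N2: "\<forall>n\<ge>N2. outer_prob M {\<omega> \<in> space M. ennreal (\<delta>1/2) < ennreal (\<beta> * (cp * (1 + cp))) * INFc n \<omega>} \<le> ennreal \<eta>1"
      using conv_enn0_D[of M _ "\<delta>1/2" \<eta>1] \<delta>1 \<eta>1 by auto
    have "conv_prob_enn0 M (\<lambda>n \<omega>. ennreal \<gamma> * sn n \<omega>)"
      unfolding sn_def by (rule conv_enn0_cmult[OF SC2 \<gamma>0])
    then obtain N3 where N3: "\<forall>n\<ge>N3. outer_prob M {\<omega> \<in> space M. ennreal \<delta>1 < ennreal \<gamma> * sn n \<omega>} \<le> ennreal \<eta>1"
      using conv_enn0_D[of M _ \<delta>1 \<eta>1] \<delta>1 \<eta>1 by auto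
    show "\<exists>N. \<forall>n\<ge>N. outer_prob M {\<omega> \<in> space M. ennreal \<delta> < Z n \<omega>} \<le> ennreal \<eta>"
    proof (intro exI allI impI)
      fix n assume n: "max (max N1 N2) (max N3 1) \<le> n"
      hence n1: "1 \<le> n" by simp
      define an where "an = (\<lambda>\<omega>. ennreal (1 / real n) * (\<Sum>i\<in>{1..n}. nn_cond_exp M (Fn M attr n) (\<lambda>\<omega>. ennreal (Jr n i \<omega>)) \<omega>))"
      define bn where "bn = (\<lambda>\<omega>. ennreal (1 / real n) * (\<Sum>i\<in>{1..n}. nn_cond_exp M (Fn M attr n) (\<lambda>\<omega>. hA p A (f n i \<omega>)) \<omega>))"
      define dn where "dn = (\<lambda>\<omega>. ennreal (1 / real n) * (\<Sum>i\<in>{1..n}. nn_cond_exp M (Fn M attr n) (\<lambda>\<omega>. indicator (Stail \<phi> m) (Xt n i [] \<omega>)) \<omega>))"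
      have R4n: "AE \<omega> in M. opnorm_p p n (\<lambda>i j. \<sigma>m (gmark E attr n i \<omega>) * \<phi> (gmark E attr n j \<omega>) * real (E n j i \<omega>)) \<le> ennreal K"
        using R4 by eventually_elim auto
      have A0: "0 \<le> A" using A2 by simp
      note Zb0 = Zbound[where M=M and attr=attr and E=E and p=p and \<sigma>m=\<sigma>m and \<phi>=\<phi> and K=K and n=n and Xt=Xt
          and A=A and m=m and k=k and \<epsilon>=\<epsilon> and \<theta>=\<theta>,
          OF M attr_meas E_meas p \<sigma>m_cont \<sigma>m_nonneg \<phi>_meas \<phi>_nonneg K R4n Xt_meas A0]
      have Zb: "AE \<omega> in M. Z n \<omega> \<le> ennreal \<alpha> * an \<omega> + ennreal \<beta> * bn \<omega> + ennreal \<gamma> * sn n \<omega> + ennreal \<gamma>' * dn \<omega>"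
        using Zb0
      proof eventually_elim
        case (elim \<omega>)
        have "Z n \<omega> \<le> ennreal (1 / real n) * (\<Sum>i\<in>{1..n}. ennreal \<alpha> * nn_cond_exp M (Fn M attr n) (\<lambda>\<omega>. ennreal (Jr n i \<omega>)) \<omega>
          + ennreal \<beta> * nn_cond_exp M (Fn M attr n) (\<lambda>\<omega>. hA p A (f n i \<omega>)) \<omega>
          + ennreal \<gamma> * nn_cond_exp M (Fn M attr n) (\<lambda>\<omega>. ennreal (rho (gmark E attr n i \<omega>) (Xt n i [] \<omega>))) \<omega>
          + ennreal \<gamma>' * nn_cond_exp M (Fn M attr n) (\<lambda>\<omega>. indicator (Stail \<phi> m) (Xt n i [] \<omega>)) \<omega>)"
          unfolding Z_def \<alpha>_def \<beta>_def \<gamma>_def \<gamma>'_def cp_def Jr_def Sv_def f_def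
          by (rule mult_left_mono) (use elim in auto)
        also have "\<dots> = ennreal \<alpha> * an \<omega> + ennreal \<beta> * bn \<omega> + ennreal \<gamma> * sn n \<omega> + ennreal \<gamma>' * dn \<omega>"
          unfolding an_def bn_def sn_def dn_def
          by (simp add: sum.distrib distrib_left sum_distrib_left mult.left_commute)
        finally show ?case .
      qed
      have o1: "outer_prob M {\<omega> \<in> space M. ennreal \<delta>1 < ennreal \<alpha> * an \<omega>} \<le> ennreal \<eta>1"
      proof -
        have at: "AE \<omega> in M. an \<omega> = ennreal \<bar>U n \<omega> - 1\<bar>"
          using a_term[OF M attr_meas n1, where P="\<lambda>i \<omega>. F_event E attr n k \<epsilon> i (Xt n i) (\<theta> n i) \<omega>"]
          unfolding an_def Jr_def Sv_def U_def .
        have "outer_prob M {\<omega> \<in> space M. ennreal \<delta>1 < ennreal \<alpha> * an \<omega>}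
            \<le> outer_prob M {\<omega> \<in> space M. \<delta>1 / (\<alpha> + 1) < \<bar>U n \<omega> - 1\<bar>}"
        proof (rule op_AE_le[OF finM])
          show "AE \<omega> in M. ennreal \<delta>1 < ennreal \<alpha> * an \<omega> \<longrightarrow> \<delta>1 / (\<alpha> + 1) < \<bar>U n \<omega> - 1\<bar>"
            using at
          proof eventually_elim
            case (elim \<omega>)
            show ?case
            proof
              assume "ennreal \<delta>1 < ennreal \<alpha> * an \<omega>"
              moreover have "ennreal \<alpha> * an \<omega> = ennreal (\<alpha> * \<bar>U n \<omega> - 1\<bar>)"
                unfolding elim using \<alpha>0 by (intro ennreal_mult[symmetric]) auto
              ultimately have "ennreal \<delta>1 < ennreal (\<alpha> * \<bar>U n \<omega> - 1\<bar>)" by simp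
              hence "\<delta>1 < \<alpha> * \<bar>U n \<omega> - 1\<bar>" using \<delta>1 ennreal_less_iff[of \<delta>1] by auto
              moreover have "\<bar>U n \<omega> - 1\<bar> * (\<alpha> + 1) = \<alpha> * \<bar>U n \<omega> - 1\<bar> + \<bar>U n \<omega> - 1\<bar>" by (simp add: algebra_simps)
              moreover have "0 \<le> \<bar>U n \<omega> - 1\<bar>" by simp
              ultimately have "\<delta>1 < \<bar>U n \<omega> - 1\<bar> * (\<alpha> + 1)" by linarith
              thus "\<delta>1 / (\<alpha> + 1) < \<bar>U n \<omega> - 1\<bar>" using \<alpha>0 by (subst divide_less_eq) auto
            qed
          qed
        qed
        also have "\<dots> \<le> ennreal \<eta>1" using N1 n by (meson max.bounded_iff)
        finally show ?thesis .
      qed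
      have o2: "outer_prob M {\<omega> \<in> space M. ennreal \<delta>1 < ennreal \<beta> * bn \<omega>} \<le> ennreal \<eta>1"
      proof -
        have bt: "AE \<omega> in M. bn \<omega> \<le> ennreal (cp * (1 + cp)) * INFc n \<omega> + ennreal cp * tailL p L A"
          using b_term[OF M Fn_subalg[OF attr_meas] \<kappa>[OF n1] fm p A2, of L]
          unfolding bn_def INFc_def cp_def .
        have "outer_prob M {\<omega> \<in> space M. ennreal \<delta>1 < ennreal \<beta> * bn \<omega>}
            \<le> outer_prob M {\<omega> \<in> space M. ennreal (\<delta>1/2) < ennreal (\<beta> * (cp * (1 + cp))) * INFc n \<omega>}"
        proof (rule op_AE_le[OF finM])
          show "AE \<omega> in M. ennreal \<delta>1 < ennreal \<beta> * bn \<omega> \<longrightarrow> ennreal (\<delta>1/2) < ennreal (\<beta> * (cp * (1 + cp))) * INFc n \<omega>"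
            using bt
          proof eventually_elim
            case (elim \<omega>)
            show ?case
            proof (rule impI, rule ccontr)
              assume h1: "ennreal \<delta>1 < ennreal \<beta> * bn \<omega>"
                and h2: "\<not> ennreal (\<delta>1/2) < ennreal (\<beta> * (cp * (1 + cp))) * INFc n \<omega>"
              have "ennreal \<beta> * bn \<omega> \<le> ennreal \<beta> * (ennreal (cp * (1 + cp)) * INFc n \<omega> + ennreal cp * tailL p L A)"
                using elim by (rule mult_left_mono) simp
              also have "\<dots> = ennreal (\<beta> * (cp * (1 + cp))) * INFc n \<omega> + ennreal \<beta> * (ennreal cp * tailL p L A)"
              proof -
                have e: "ennreal (\<beta> * (cp * (1 + cp))) = ennreal \<beta> * ennreal (cp * (1 + cp))"
                  using \<beta>0 cp0 by (intro ennreal_mult) auto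
                show ?thesis unfolding e by (simp only: distrib_left mult.assoc)
              qed
              also have "\<dots> < ennreal (\<delta>1/2 + \<delta>1/2)"
                using h2 At \<delta>1 by (intro ennreal_add_lt_aux) auto
              finally have lt: "ennreal \<beta> * bn \<omega> < ennreal (\<delta>1/2 + \<delta>1/2)" .
              have "\<delta>1/2 + \<delta>1/2 = \<delta>1" by simp
              with lt have "ennreal \<beta> * bn \<omega> < ennreal \<delta>1" by simp
              with h1 show False by (rule less_asym)
            qed
          qed
        qed
        also have "\<dots> \<le> ennreal \<eta>1" using N2 n by (meson max.bounded_iff)
        finally show ?thesis .
      qed
      have o3: "outer_prob M {\<omega> \<in> space M. ennreal \<delta>1 < ennreal \<gamma> * sn n \<omega>} \<le> ennreal \<eta>1"
        using N3 n by (meson max.bounded_iff)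
      have o4: "outer_prob M {\<omega> \<in> space M. ennreal \<delta>1 < ennreal \<gamma>' * dn \<omega>} \<le> ennreal \<eta>1"
      proof -
        have dm: "dn \<in> borel_measurable M" unfolding dn_def by measurable
        have "outer_prob M {\<omega> \<in> space M. ennreal \<delta>1 < ennreal \<gamma>' * dn \<omega>} \<le> ennreal (1 / \<delta>1) * (\<integral>\<^sup>+ \<omega>. ennreal \<gamma>' * dn \<omega> \<partial>M)"
          using dm \<delta>1 by (intro op_markov) auto
        also have "(\<integral>\<^sup>+ \<omega>. ennreal \<gamma>' * dn \<omega> \<partial>M) = ennreal \<gamma>' * emeasure \<mu>r (Stail \<phi> m)"
          using dm d_term[where M=M and attr=attr and n=n and Xt=Xt and \<mu>r=\<mu>r and S="Stail \<phi> m", OF M attr_meas n1 Xt_meas root_law Stail_borel]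
          by (subst nn_integral_cmult) (auto simp: dn_def)
        finally show ?thesis using m by simp
      qed
      have "outer_prob M {\<omega> \<in> space M. ennreal \<delta> < Z n \<omega>}
          \<le> outer_prob M {\<omega> \<in> space M. ennreal \<delta> < ennreal \<alpha> * an \<omega> + ennreal \<beta> * bn \<omega> + ennreal \<gamma> * sn n \<omega> + ennreal \<gamma>' * dn \<omega>}"
        by (rule op_AE_le[OF finM]) (use Zb in \<open>eventually_elim, blast intro: less_le_trans\<close>)
      also have "\<dots> \<le> outer_prob M ({\<omega> \<in> space M. ennreal \<delta>1 < ennreal \<alpha> * an \<omega>} \<union> {\<omega> \<in> space M. ennreal \<delta>1 < ennreal \<beta> * bn \<omega>}
           \<union> {\<omega> \<in> space M. ennreal \<delta>1 < ennreal \<gamma> * sn n \<omega>} \<union> {\<omega> \<in> space M. ennreal \<delta>1 < ennreal \<gamma>' * dn \<omega>})"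
      proof (rule op_mono, rule subsetI)
        fix \<omega> assume "\<omega> \<in> {\<omega> \<in> space M. ennreal \<delta> < ennreal \<alpha> * an \<omega> + ennreal \<beta> * bn \<omega> + ennreal \<gamma> * sn n \<omega> + ennreal \<gamma>' * dn \<omega>}"
        hence "\<omega> \<in> space M" "ennreal \<delta> < ennreal \<alpha> * an \<omega> + ennreal \<beta> * bn \<omega> + ennreal \<gamma> * sn n \<omega> + ennreal \<gamma>' * dn \<omega>" by auto
        from this(1) split4[OF \<delta> this(2)]
        show "\<omega> \<in> {\<omega> \<in> space M. ennreal \<delta>1 < ennreal \<alpha> * an \<omega>} \<union> {\<omega> \<in> space M. ennreal \<delta>1 < ennreal \<beta> * bn \<omega>}
           \<union> {\<omega> \<in> space M. ennreal \<delta>1 < ennreal \<gamma> * sn n \<omega>} \<union> {\<omega> \<in> space M. ennreal \<delta>1 < ennreal \<gamma>' * dn \<omega>}"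
          unfolding \<delta>1_def by blast
      qed
      also have "\<dots> \<le> outer_prob M {\<omega> \<in> space M. ennreal \<delta>1 < ennreal \<alpha> * an \<omega>} + outer_prob M {\<omega> \<in> space M. ennreal \<delta>1 < ennreal \<beta> * bn \<omega>}
           + outer_prob M {\<omega> \<in> space M. ennreal \<delta>1 < ennreal \<gamma> * sn n \<omega>} + outer_prob M {\<omega> \<in> space M. ennreal \<delta>1 < ennreal \<gamma>' * dn \<omega>}"
        using op_union[OF finM, of "{\<omega> \<in> space M. ennreal \<delta>1 < ennreal \<alpha> * an \<omega>} \<union> {\<omega> \<in> space M. ennreal \<delta>1 < ennreal \<beta> * bn \<omega>}
           \<union> {\<omega> \<in> space M. ennreal \<delta>1 < ennreal \<gamma> * sn n \<omega>}" "{\<omega> \<in> space M. ennreal \<delta>1 < ennreal \<gamma>' * dn \<omega>}"]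
          op_union[OF finM, of "{\<omega> \<in> space M. ennreal \<delta>1 < ennreal \<alpha> * an \<omega>} \<union> {\<omega> \<in> space M. ennreal \<delta>1 < ennreal \<beta> * bn \<omega>}"
             "{\<omega> \<in> space M. ennreal \<delta>1 < ennreal \<gamma> * sn n \<omega>}"]
          op_union[OF finM, of "{\<omega> \<in> space M. ennreal \<delta>1 < ennreal \<alpha> * an \<omega>}" "{\<omega> \<in> space M. ennreal \<delta>1 < ennreal \<beta> * bn \<omega>}"]
        by (smt (verit) add_right_mono order_trans)
      also have "\<dots> \<le> ennreal \<eta>1 + ennreal \<eta>1 + ennreal \<eta>1 + ennreal \<eta>1"
        using o1 o2 o3 o4 by (intro add_mono) auto
      also have "\<dots> = ennreal \<eta>" unfolding \<eta>1_def using \<eta> by (simp flip: ennreal_plus)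
      finally show "outer_prob M {\<omega> \<in> space M. ennreal \<delta> < Z n \<omega>} \<le> ennreal \<eta>" .
    qed
  qed
  show ?thesis using conv_enn0_root[OF p Zc] unfolding Z_def .
qed



theorem lemmaL:
  fixes M :: "'w measure"
    and attr :: "nat \<Rightarrow> nat \<Rightarrow> 'w \<Rightarrow> 'a::{metric_space, second_countable_topology}"
    and E :: "nat \<Rightarrow> nat \<Rightarrow> nat \<Rightarrow> 'w \<Rightarrow> nat"
    and p :: real
    and g :: "real \<Rightarrow> 'a mark \<Rightarrow> real"
    and \<Phi> :: "'a mark \<Rightarrow> 'z \<Rightarrow> (real \<times> 'x) list \<Rightarrow> real"
    and Z :: "'z measure" and Xi :: "'x measure"
    and \<sigma>m \<sigma>p \<beta> :: "'a mark \<Rightarrow> real"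
    and K K0 H Q \<alpha> \<gamma> :: real
    and \<mu>r \<mu> :: "'a mark measure"
    and Xt :: "nat \<Rightarrow> nat \<Rightarrow> nat list \<Rightarrow> 'w \<Rightarrow> 'a mark"
    and \<theta> :: "nat \<Rightarrow> nat \<Rightarrow> nat list \<Rightarrow> 'w \<Rightarrow> nat"
    and k :: nat and \<epsilon> :: real
  assumes M: "prob_space M"
    and attr_meas: "\<And>n i. attr n i \<in> borel_measurable M"
    and E_meas: "\<And>n j i. E n j i \<in> measurable M (count_space UNIV)"
    and p: "1 \<le> p"
    (* generic noise vector: zeta ~ Z, xi_j ~ Xi, independent (product measure) *)
    and Z: "prob_space Z" and Xi: "prob_space Xi"
    and g_meas: "(\<lambda>(r, x). g r x) \<in> borel_measurable borel"
    and Phi_meas: "\<And>x d v. (\<lambda>z. Phi_app \<Phi> x d v (fst z) (snd z))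
                      \<in> borel_measurable (Z \<Otimes>\<^sub>M PiM {..<d} (\<lambda>_. Xi))"
    (* Assumption R *)
    and \<sigma>m_cont: "continuous_on UNIV \<sigma>m" and \<sigma>m_nonneg: "\<And>x. 0 \<le> \<sigma>m x"
    and \<sigma>p_cont: "continuous_on UNIV \<sigma>p" and \<sigma>p_nonneg: "\<And>x. 0 \<le> \<sigma>p x"
    and \<beta>_cont: "continuous_on UNIV \<beta>" and \<beta>_nonneg: "\<And>x. 0 \<le> \<beta> x"
    and R1: "\<And>x v w. noise_Lp Z Xi (fst x) p
               (\<lambda>z xs. Phi_app \<Phi> x (fst x) v z xs - Phi_app \<Phi> x (fst x) w z xs)
             \<le> ennreal (\<sigma>m x * (\<Sum>j<fst x. \<bar>v j - w j\<bar>))"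
    and R2: "\<And>x r r'. \<bar>g r x - g r' x\<bar> \<le> \<sigma>p x * \<bar>r - r'\<bar>"
    and R3: "\<And>x v. noise_Lp Z Xi (fst x) p (Phi_app \<Phi> x (fst x) v)
             \<le> ennreal (\<sigma>m x * (\<Sum>j<fst x. \<bar>v j\<bar>) + \<beta> x)"
    and R4: "AE \<omega> in M. \<forall>n.
               opnorm_p p n (\<lambda>i j. \<sigma>m (gmark E attr n i \<omega>) * \<sigma>p (gmark E attr n j \<omega>) * real (E n j i \<omega>))
                 \<le> ennreal K \<and>
               opnorm_p p n (\<lambda>i j. \<sigma>m (gmark E attr n i \<omega>) * \<bar>g 0 (gmark E attr n j \<omega>)\<bar> * real (E n j i \<omega>))
                 \<le> ennreal K0"
    and HQ: "0 < H" "0 < Q" "0 < \<alpha>" "0 < \<gamma>"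
    and R5: "\<And>x y v r e. 0 < e \<Longrightarrow> e < 1 \<Longrightarrow> rho x y \<le> e \<Longrightarrow>
               noise_Lp Z Xi (fst x) p
                 (\<lambda>z xs. Phi_app \<Phi> x (fst x) v z xs - Phi_app \<Phi> y (fst x) v z xs)
               \<le> ennreal (H * max 1 (\<sigma>m x * (\<Sum>j<fst x. \<bar>v j\<bar>) + \<beta> x) * rho x y powr \<alpha>)
             \<and> \<bar>g r x - g r y\<bar> \<le> Q * max 1 (\<sigma>p x * \<bar>r\<bar>) * rho x y powr \<gamma>"
    (* strong coupling: delayed marked Galton-Watson trees, law independent of n *)
    and tree_indep: "\<And>n i. prob_space.indep_vars M (\<lambda>_. borel) (Xt n i) ulam"
    and tree_root_law: "\<And>n i. distr M borel (Xt n i []) = \<mu>r"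
    and tree_law: "\<And>n i u. u \<in> ulam \<Longrightarrow> u \<noteq> [] \<Longrightarrow> distr M borel (Xt n i u) = \<mu>"
    and theta_meas: "\<And>n i u. \<theta> n i u \<in> measurable M (count_space UNIV)"
    and SC1: "\<And>k'. 1 \<le> k' \<Longrightarrow> conv_prob M (\<lambda>n \<omega>. (1 / real n) * (\<Sum>i\<in>{1..n}.
               real_cond_exp M (Fn M attr n)
                 (indicator {\<omega>\<in>space M. \<not> iso_event E n k' i (Xt n i) (\<theta> n i) \<omega>}) \<omega>)) 0"
    and SC2: "conv_prob_enn0 M (\<lambda>n \<omega>. ennreal (1 / real n) * (\<Sum>i\<in>{1..n}.
               nn_cond_exp M (Fn M attr n)
                 (\<lambda>\<omega>. ennreal (rho (gmark E attr n i \<omega>) (Xt n i [] \<omega>))) \<omega>))"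
    and SC3: "\<And>k' e. 1 \<le> k' \<Longrightarrow> 0 < e \<Longrightarrow> e < 1 \<Longrightarrow>
               conv_prob M (\<lambda>n \<omega>. (1 / real n) * (\<Sum>i\<in>{1..n}.
               real_cond_exp M (Fn M attr n)
                 (indicator {\<omega>\<in>space M. F_event E attr n k' e i (Xt n i) (\<theta> n i) \<omega>}) \<omega>)) 1"
    (* Assumption G: moments and d_p convergence *)
    and G1: "(\<integral>\<^sup>+ x. ennreal ((real (fst x) * \<sigma>m x) powr p + \<beta> x powr p) \<partial>\<mu>r) < \<infinity>"
    and G2: "(\<integral>\<^sup>+ x. ennreal ((real (fst x) * \<sigma>m x * \<sigma>p x) powr p + (\<sigma>p x * \<beta> x) powr p
               + \<sigma>p x powr p + \<bar>g 0 x\<bar> powr p) \<partial>\<mu>) < \<infinity>"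
    and G3: "dp_conv M (Fn M attr) p (\<lambda>n i \<omega>. \<sigma>m (gmark E attr n i \<omega>) * real (fst (gmark E attr n i \<omega>)))
               (distr \<mu>r borel (\<lambda>x. \<sigma>m x * real (fst x)))"
    and G4: "dp_conv M (Fn M attr) p (\<lambda>n i \<omega>. \<beta> (gmark E attr n i \<omega>)) (distr \<mu>r borel \<beta>)"
    (* the fixed k and epsilon *)
    and k: "1 \<le> k" and \<epsilon>: "0 < \<epsilon>" "\<epsilon> < 1"
  shows "conv_prob_enn0 M (\<lambda>n \<omega>.
      enn_root p (ennreal (1 / real n) * (\<Sum>i\<in>{1..n}. nn_cond_exp M (Fn M attr n)
         (\<lambda>\<omega>. ennreal (((if F_event E attr n k \<epsilon> i (Xt n i) (\<theta> n i) \<omega> then 0 else 1)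
             * \<sigma>m (gmark E attr n i \<omega>)
             * (\<Sum>j\<in>{1..n}. real (E n j i \<omega>) * \<sigma>p (gmark E attr n j \<omega>))) powr p)) \<omega>))
    + enn_root p (ennreal (1 / real n) * (\<Sum>i\<in>{1..n}. nn_cond_exp M (Fn M attr n)
         (\<lambda>\<omega>. ennreal (((if F_event E attr n k \<epsilon> i (Xt n i) (\<theta> n i) \<omega> then 0 else 1)
             * \<sigma>m (gmark E attr n i \<omega>)
             * (\<Sum>j\<in>{1..n}. real (E n j i \<omega>) * \<bar>g 0 (gmark E attr n j \<omega>)\<bar>)) powr p)) \<omega>)))"
proof -
  have finM: "finite_measure M" using M by (simp add: prob_space_def)
  have Xt_meas: "\<And>n i. Xt n i [] \<in> borel_measurable M"
  proof -
    fix n i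
    have "[] \<in> ulam" unfolding ulam_def by simp
    thus "Xt n i [] \<in> borel_measurable M"
      using tree_indep[of n i] unfolding prob_space.indep_vars_def[OF M] by auto
  qed
  have G1': "(\<integral>\<^sup>+ x. ennreal ((real (fst x) * \<sigma>m x) powr p) \<partial>\<mu>r) < \<infinity>"
    using G1 by (rule le_less_trans[rotated]) (intro nn_integral_mono ennreal_leI, simp)
  have SC3k: "conv_prob M (\<lambda>n \<omega>. (1 / real n) * (\<Sum>i\<in>{1..n}.
               real_cond_exp M (Fn M attr n)
                 (indicator {\<omega>\<in>space M. F_event E attr n k \<epsilon> i (Xt n i) (\<theta> n i) \<omega>}) \<omega>)) 1"
    using SC3[OF k \<epsilon>] .
  have R4a: "AE \<omega> in M. \<forall>n. opnorm_p p n (\<lambda>i j. \<sigma>m (gmark E attr n i \<omega>) * \<sigma>p (gmark E attr n j \<omega>) * real (E n j i \<omega>))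
     \<le> ennreal (max 0 K)"
    using R4 by eventually_elim (simp add: ennreal_max_0)
  have R4b: "AE \<omega> in M. \<forall>n. opnorm_p p n (\<lambda>i j. \<sigma>m (gmark E attr n i \<omega>) * (\<lambda>x. \<bar>g 0 x\<bar>) (gmark E attr n j \<omega>) * real (E n j i \<omega>))
     \<le> ennreal (max 0 K0)"
    using R4 by eventually_elim (simp add: ennreal_max_0)
  have gm: "(\<lambda>x. \<bar>g 0 x\<bar>) \<in> borel_measurable borel"
  proof -
    have "(\<lambda>x::'a mark. (0::real, x)) \<in> borel_measurable borel"
      by (intro borel_measurable_continuous_onI continuous_intros)
    from measurable_compose[OF this g_meas] have "(\<lambda>x. g 0 x) \<in> borel_measurable borel" by simp
    thus ?thesis by measurable
  qed
  have gloc: "\<exists>r>0. \<exists>B. \<forall>x. rho x y < r \<longrightarrow> \<bar>g 0 x\<bar> \<le> B" for y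
  proof (intro exI conjI allI impI)
    show "(1/2::real) > 0" by simp
    fix x assume x: "rho x y < 1/2"
    have "\<bar>g 0 x - g 0 y\<bar> \<le> Q * max 1 (\<sigma>p x * \<bar>0\<bar>) * rho x y powr \<gamma>"
      using R5[of "1/2" x y "\<lambda>_. 0" 0] x by simp
    also have "\<dots> = Q * rho x y powr \<gamma>" by simp
    also have "\<dots> \<le> Q * 1" using HQ x rho_nonneg[of x y]
      by (intro mult_left_mono powr_le1) auto
    finally show "\<bar>g 0 x\<bar> \<le> \<bar>g 0 y\<bar> + Q" by simp
  qed
  note c1 = main_generic[where \<phi>=\<sigma>p and K="max 0 K", OF M attr_meas E_meas p \<sigma>m_cont \<sigma>m_nonneg
      borel_measurable_continuous_onI[OF \<sigma>p_cont] \<sigma>p_nonneg loc_bound_cont[OF \<sigma>p_cont] max.cobounded1 R4a Xt_meas tree_root_law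
      SC2 SC3k G1' G3]
  note c2 = main_generic[where \<phi>="\<lambda>x. \<bar>g 0 x\<bar>" and K="max 0 K0", OF M attr_meas E_meas p \<sigma>m_cont \<sigma>m_nonneg
      gm _ gloc max.cobounded1 R4b Xt_meas tree_root_law SC2 SC3k G1' G3]
  show ?thesis using conv_enn0_add[OF finM c1 c2] by simp
qed


end
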